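(* Let $\mathfrak M$ be a closed O*-algebra on a dense subspace $\mathcal D$ of a Hilbert space $\mathcal H$ such that $\mathfrak M'_{\mathrm w}\mathcal D\subset\mathcal D$, and let $E'$ be a projection in the von Neumann algebra $\mathfrak M'_{\mathrm w}$. Let $Z$ be the central support of $E'$, $\mathcal E:=\langle \mathfrak M'_{\mathrm w}E'\mathcal D\rangle\oplus (I-Z)\mathcal D$, and for $X\in(\mathfrak M_{E'})''_{\mathrm{wc}}$ let $X_e\in\mathcal L^\dagger(\mathcal E)$ be the operator $X_e\big(\sum_k C_kE'\xi_k+(I-Z)\eta\big)=\sum_k C_kX(E'\xi_k)$ ($C_k\in\mathfrak M'_{\mathrm w}$, $\xi_k,\eta\in\mathcal D$). Suppose that $\bigcap_{X\in(\mathfrak M_{E'})''_{\mathrm{wc}}}D(\overline{X_e})=\mathcal D$ (i.e. the completion of $\mathcal E$ with respect to the graph topology of the O*-algebra $\{X_e: X\in(\mathfrak M_{E'})''_{\mathrm{wc}}\}$ equals $\mathcal D$). Then $(\mathfrak M''_{\mathrm{wc}})_{E'}=(\mathfrak M_{E'})''_{\mathrm{wc}}$.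
   Context: For a dense subspace $\mathcal D$ of $\mathcal H$, $\mathcal L^\dagger(\mathcal D)$ is the set of linear operators $X$ with domain $\mathcal D$ such that $X\mathcal D\subset\mathcal D$, $\mathcal D\subset D(X^* )$, $X^*\mathcal D\subset\mathcal D$, a *-algebra with involution $X^\dagger:=X^*\upharpoonright\mathcal D$. An O*-algebra on $\mathcal D$ is a *-subalgebra of $\mathcal L^\dagger(\mathcal D)$ containing the identity. The graph topology $t_{\mathfrak M}$ is defined by the seminorms $\xi\mapsto\|X\xi\|$, $X\in\mathfrak M$; $\mathfrak M$ is closed if $\mathcal D[t_{\mathfrak M}]$ is complete. Weak commutant: $\mathfrak M'_{\mathrm w}=\{C\in\mathcal B(\mathcal H):\langle CX\xi,\eta\rangle=\langle C\xi,X^\dagger\eta\rangle\ \forall X\in\mathfrak M,\ \xi,\eta\in\mathcal D\}$ (a von Neumann algebra when $\mathfrak M'_{\mathrm w}\mathcal D\subset\mathcal D$). Unbounded bicommutant: $\mathfrak M''_{\mathrm{wc}}=\{X\in\mathcal L^\dagger(\mathcal D):\langle CX\xi,\eta\rangle=\langle C\xi,X^\dagger\eta\rangle\ \forall C\in\mathfrak M'_{\mathrm w},\ \xi,\eta\in\mathcal D\}$. For an O*-algebra $\mathfrak N$ on $\mathcal D$ and a projection $E'\in\mathfrak N'_{\mathrm w}$ with $E'\mathcal D\subset\mathcal D$, the reduced algebra is $\mathfrak N_{E'}=\{XE'\upharpoonright E'\mathcal D: X\in\mathfrak N\}$, an O*-algebra on $E'\mathcal D$ in the Hilbert space $E'\mathcal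 H$; $(\mathfrak M_{E'})''_{\mathrm{wc}}$ is the unbounded bicommutant computed relative to $E'\mathcal D\subset E'\mathcal H$. (Note $(\mathfrak M''_{\mathrm{wc}})'_{\mathrm w}=\mathfrak M'_{\mathrm w}$, so $E'$ may be used to reduce $\mathfrak M''_{\mathrm{wc}}$.) The central support $Z$ of $E'$ is the projection onto the closure of $\langle\mathfrak M'_{\mathrm w}E'\mathcal H\rangle$, where $\langle\cdot\rangle$ denotes linear span. $\overline{X_e}$ denotes the closure of the closable operator $X_e$. *)

theory Defs
  imports "HOL-Analysis.Analysis"
begin

class cvector = real_vector +
  fixes scaleC :: "complex \<Rightarrow> 'a \<Rightarrow> 'a" (infixr "*\<^sub>C" 75)
  assumes scaleC_add_right: "a *\<^sub>C (x + y) = a *\<^sub>C x + a *\<^sub>C y"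
    and scaleC_add_left: "(a + b) *\<^sub>C x = a *\<^sub>C x + b *\<^sub>C x"
    and scaleC_scaleC: "a *\<^sub>C (b *\<^sub>C x) = (a * b) *\<^sub>C x"
    and scaleC_one: "1 *\<^sub>C x = x"
    and scaleR_scaleC: "scaleR r x = complex_of_real r *\<^sub>C x"

class cinner_space = cvector + real_normed_vector +
  fixes cinner :: "'a \<Rightarrow> 'a \<Rightarrow> complex"
  assumes cinner_commute: "cinner x y = cnj (cinner y x)"
    and cinner_add_left: "cinner (x + y) z = cinner x z + cinner y z"
    and cinner_scaleC_left: "cinner (a *\<^sub>C x) y = a * cinner x y"
    and cinner_self_real: "Im (cinner x x) = 0"
    and cinner_self_nonneg: "0 \<le> Re (cinner x x)"
    and cinner_self_eq_zero: "cinner x x = 0 \<longleftrightarrow> x = 0"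
    and norm_eq_sqrt_cinner: "norm x = sqrt (Re (cinner x x))"

class chilbert_space = cinner_space + complete_space


instantiation complex :: chilbert_space
begin
definition scaleC_complex :: "complex \<Rightarrow> complex \<Rightarrow> complex" where "scaleC_complex a x = a * x"
definition cinner_complex :: "complex \<Rightarrow> complex \<Rightarrow> complex" where "cinner_complex x y = x * cnj y"
instance
proof
  fix x y z a b :: complex and r :: real
  show "a *\<^sub>C (x + y) = a *\<^sub>C x + a *\<^sub>C y" by (simp add: scaleC_complex_def algebra_simps)
  show "(a + b) *\<^sub>C x = a *\<^sub>C x + b *\<^sub>C x" by (simp add: scaleC_complex_def algebra_simps)
  show "a *\<^sub>C (b *\<^sub>C x) = (a * b) *\<^sub>C x" by (simp add: scaleC_complex_def)
  show "1 *\<^sub>C x = x" by (simp add: scaleC_complex_def)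
  show "scaleR r x = complex_of_real r *\<^sub>C x" by (simp add: scaleC_complex_def scaleR_conv_of_real)
  show "cinner x y = cnj (cinner y x)" by (simp add: cinner_complex_def)
  show "cinner (x + y) z = cinner x z + cinner y z" by (simp add: cinner_complex_def algebra_simps)
  show "cinner (a *\<^sub>C x) y = a * cinner x y" by (simp add: cinner_complex_def scaleC_complex_def)
  show "Im (cinner x x) = 0" by (simp add: cinner_complex_def)
  show "0 \<le> Re (cinner x x)" by (simp add: cinner_complex_def)
  show "cinner x x = 0 \<longleftrightarrow> x = 0" by (simp add: cinner_complex_def)
  show "norm x = sqrt (Re (cinner x x))" by (simp add: cinner_complex_def complex_mult_cnj cmod_def power2_eq_square)
qed
end

section \<open>Subspaces, bounded operators, projections (relative to a closed subspace K)\<close>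

definition csubspace :: "'h::cvector set \<Rightarrow> bool" where
  "csubspace S \<longleftrightarrow> 0 \<in> S \<and> (\<forall>x\<in>S. \<forall>y\<in>S. x + y \<in> S) \<and> (\<forall>a. \<forall>x\<in>S. a *\<^sub>C x \<in> S)"

definition cspan :: "'h::cvector set \<Rightarrow> 'h set" where
  "cspan S = {y. \<exists>n (a::nat \<Rightarrow> complex) v. (\<forall>k<n. v k \<in> S) \<and> y = (\<Sum>k<n. a k *\<^sub>C v k)}"

definition clinear_on :: "'h::cvector set \<Rightarrow> ('h \<Rightarrow> 'h) \<Rightarrow> bool" where
  "clinear_on S X \<longleftrightarrow> (\<forall>x\<in>S. \<forall>y\<in>S. X (x + y) = X x + X y) \<and> (\<forall>a. \<forall>x\<in>S. X (a *\<^sub>C x) = a *\<^sub>C X x)"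

text \<open>Bounded operators on the Hilbert space K (a closed subspace of the ambient space),
  represented by functions vanishing outside K.\<close>
definition bops :: "'h::chilbert_space set \<Rightarrow> ('h \<Rightarrow> 'h) set" where
  "bops K = {C. clinear_on K C \<and> C ` K \<subseteq> K \<and> (\<exists>c. \<forall>x\<in>K. norm (C x) \<le> c * norm x)
              \<and> (\<forall>x. x \<notin> K \<longrightarrow> C x = 0)}"

definition is_proj :: "'h::chilbert_space set \<Rightarrow> ('h \<Rightarrow> 'h) \<Rightarrow> bool" where
  "is_proj K P \<longleftrightarrow> P \<in> bops K \<and> (\<forall>x. P (P x) = P x) \<and> (\<forall>x\<in>K. \<forall>y\<in>K. cinner (P x) y = cinner x (P y))"

section \<open>Unbounded operators on a dense domain D\<close>

text \<open>L-dagger(D): linear maps X with domain D (vanishing outside D), with X D \<subseteq> D,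
  D \<subseteq> D(X*) and X* D \<subseteq> D; the last two conditions say that for every eta in D the
  adjoint value X* eta exists and lies in D.\<close>
definition ldag :: "'h::chilbert_space set \<Rightarrow> ('h \<Rightarrow> 'h) set" where
  "ldag D = {X. clinear_on D X \<and> X ` D \<subseteq> D
              \<and> (\<forall>\<eta>\<in>D. \<exists>\<zeta>\<in>D. \<forall>\<xi>\<in>D. cinner (X \<xi>) \<eta> = cinner \<xi> \<zeta>)
              \<and> (\<forall>x. x \<notin> D \<longrightarrow> X x = 0)}"

definition adj :: "'h::chilbert_space set \<Rightarrow> ('h \<Rightarrow> 'h) \<Rightarrow> ('h \<Rightarrow> 'h)" where
  "adj D X = (\<lambda>\<eta>. if \<eta> \<in> D then (THE \<zeta>. \<zeta> \<in> D \<and> (\<forall>\<xi>\<in>D. cinner (X \<xi>) \<eta> = cinner \<xi> \<zeta>)) else 0)"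

definition idD :: "'h::chilbert_space set \<Rightarrow> 'h \<Rightarrow> 'h" where
  "idD D = (\<lambda>x. if x \<in> D then x else 0)"

definition is_Ostar_algebra :: "'h::chilbert_space set \<Rightarrow> ('h \<Rightarrow> 'h) set \<Rightarrow> bool" where
  "is_Ostar_algebra D M \<longleftrightarrow> M \<subseteq> ldag D \<and> idD D \<in> M
     \<and> (\<forall>X\<in>M. \<forall>Y\<in>M. (\<lambda>x. X x + Y x) \<in> M)
     \<and> (\<forall>a. \<forall>X\<in>M. (\<lambda>x. a *\<^sub>C X x) \<in> M)
     \<and> (\<forall>X\<in>M. \<forall>Y\<in>M. (X \<circ> Y) \<in> M)
     \<and> (\<forall>X\<in>M. adj D X \<in> M)"

text \<open>M is closed: D is complete for the graph topology t_M (the locally convex uniform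
  structure given by the seminorms xi |-> norm (X xi), X in M): every Cauchy filter on D
  converges in D.\<close>
definition graph_closed :: "'h::chilbert_space set \<Rightarrow> ('h \<Rightarrow> 'h) set \<Rightarrow> bool" where
  "graph_closed D M \<longleftrightarrow>
     (\<forall>F. F \<noteq> bot \<and> F \<le> principal D
        \<and> (\<forall>X\<in>M. \<forall>e>0. eventually (\<lambda>(x, y). norm (X x - X y) < e) (F \<times>\<^sub>F F))
        \<longrightarrow> (\<exists>\<xi>\<in>D. \<forall>X\<in>M. filterlim X (nhds (X \<xi>)) F))"

definition wcomm :: "'h::chilbert_space set \<Rightarrow> 'h set \<Rightarrow> ('h \<Rightarrow> 'h) set \<Rightarrow> ('h \<Rightarrow> 'h) set" where
  "wcomm K D M = {C \<in> bops K. \<forall>X\<in>M. \<forall>\<xi>\<in>D. \<forall>\<eta>\<in>D. cinner (C (X \<xi>)) \<eta> = cinner (C \<xi>) (adj D X \<eta>)}"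

definition wbicomm :: "'h::chilbert_space set \<Rightarrow> 'h set \<Rightarrow> ('h \<Rightarrow> 'h) set \<Rightarrow> ('h \<Rightarrow> 'h) set" where
  "wbicomm K D M = {X \<in> ldag D. \<forall>C\<in>wcomm K D M. \<forall>\<xi>\<in>D. \<forall>\<eta>\<in>D.
                      cinner (C (X \<xi>)) \<eta> = cinner (C \<xi>) (adj D X \<eta>)}"

definition reduced_alg :: "'h::chilbert_space set \<Rightarrow> ('h \<Rightarrow> 'h) \<Rightarrow> ('h \<Rightarrow> 'h) set \<Rightarrow> ('h \<Rightarrow> 'h) set" where
  "reduced_alg D E N = (\<lambda>X. (\<lambda>x. if x \<in> E ` D then X (E x) else 0)) ` N"

section \<open>The extension X_e on the space \<E> and the domain of its closure\<close>

definition ext_graph :: "'h::chilbert_space set \<Rightarrow> ('h \<Rightarrow> 'h) set \<Rightarrow> ('h \<Rightarrow> 'h) \<Rightarrow> ('h \<Rightarrow> 'h)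
                          \<Rightarrow> ('h \<Rightarrow> 'h) \<Rightarrow> ('h \<times> 'h) set" where
  "ext_graph D Mc E Z X = {(\<zeta>, w). \<exists>n (C :: nat \<Rightarrow> 'h \<Rightarrow> 'h) \<xi> \<eta>.
      (\<forall>k<n. C k \<in> Mc \<and> \<xi> k \<in> D) \<and> \<eta> \<in> D
      \<and> \<zeta> = (\<Sum>k<n. C k (E (\<xi> k))) + (\<eta> - Z \<eta>)
      \<and> w = (\<Sum>k<n. C k (X (E (\<xi> k))))}"

definition closure_dom :: "('h::chilbert_space \<times> 'h) set \<Rightarrow> 'h set" where
  "closure_dom G = {x. \<exists>f g. (\<forall>n. (f n, g n) \<in> G) \<and> f \<longlonglongrightarrow> x \<and> convergent g}"

end

theory Submission
  imports Defs
begin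


lemma scaleC_zero_right [simp]: "a *\<^sub>C (0::'a::cvector) = 0"
proof -
  have "a *\<^sub>C (0::'a) = a *\<^sub>C (0 + 0)" by simp
  also have "\<dots> = a *\<^sub>C 0 + a *\<^sub>C 0" by (rule scaleC_add_right)
  finally show ?thesis by simp
qed

lemma scaleC_zero_left [simp]: "(0::complex) *\<^sub>C (x::'a::cvector) = 0"
proof -
  have "(0::complex) *\<^sub>C x = complex_of_real 0 *\<^sub>C x" by simp
  also have "\<dots> = 0 *\<^sub>R x" by (simp only: scaleR_scaleC)
  finally show ?thesis by simp
qed

lemma scaleC_minus_right: "a *\<^sub>C (- x) = - (a *\<^sub>C (x::'a::cvector))"
proof -
  have "a *\<^sub>C (- x) + a *\<^sub>C x = a *\<^sub>C (- x + x)" by (rule scaleC_add_right[symmetric])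
  also have "\<dots> = 0" by simp
  finally show ?thesis by (simp add: eq_neg_iff_add_eq_0)
qed

lemma scaleC_diff_right: "a *\<^sub>C (x - y) = a *\<^sub>C x - a *\<^sub>C (y::'a::cvector)"
  by (simp only: diff_conv_add_uminus scaleC_add_right scaleC_minus_right)

lemma scaleC_minus_left: "(- a) *\<^sub>C x = - (a *\<^sub>C (x::'a::cvector))"
proof -
  have "(- a) *\<^sub>C x + a *\<^sub>C x = (- a + a) *\<^sub>C x" by (rule scaleC_add_left[symmetric])
  also have "\<dots> = 0" by simp
  finally show ?thesis by (simp add: eq_neg_iff_add_eq_0)
qed

lemma scaleC_diff_left: "(a - b) *\<^sub>C x = a *\<^sub>C x - b *\<^sub>C (x::'a::cvector)"
  by (simp only: diff_conv_add_uminus scaleC_add_left scaleC_minus_left)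

lemma scaleC_sum_right: "a *\<^sub>C (\<Sum>k\<in>A. f k) = (\<Sum>k\<in>A. a *\<^sub>C (f k::'a::cvector))"
  by (induction A rule: infinite_finite_induct) (auto simp: scaleC_add_right)

lemma cinner_add_right: "cinner x (y + z) = cinner x y + cinner x (z::'a::cinner_space)"
proof -
  have "cinner x (y + z) = cnj (cinner (y + z) x)" by (rule cinner_commute)
  also have "\<dots> = cnj (cinner y x) + cnj (cinner z x)" by (simp add: cinner_add_left)
  finally show ?thesis by (simp flip: cinner_commute)
qed

lemma cinner_scaleC_right: "cinner x (a *\<^sub>C y) = cnj a * cinner x (y::'a::cinner_space)"
proof -
  have "cinner x (a *\<^sub>C y) = cnj (cinner (a *\<^sub>C y) x)" by (rule cinner_commute)
  also have "\<dots> = cnj a * cnj (cinner y x)" by (simp add: cinner_scaleC_left)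
  finally show ?thesis by (simp flip: cinner_commute)
qed

lemma cinner_zero_left [simp]: "cinner 0 (x::'a::cinner_space) = 0"
proof -
  have "cinner 0 x = cinner (0 + 0) x" by simp
  also have "\<dots> = cinner 0 x + cinner 0 x" by (rule cinner_add_left)
  finally show ?thesis by simp
qed

lemma cinner_zero_right [simp]: "cinner x (0::'a::cinner_space) = 0"
  by (subst cinner_commute) simp

lemma cinner_minus_left: "cinner (- x) (y::'a::cinner_space) = - cinner x y"
proof -
  have "cinner (- x) y + cinner x y = cinner (- x + x) y" by (rule cinner_add_left[symmetric])
  then show ?thesis by (simp add: eq_neg_iff_add_eq_0)
qed

lemma cinner_minus_right: "cinner x (- y::'a::cinner_space) = - cinner x y"
proof -
  have "cinner x (- y) + cinner x y = cinner x (- y + y)" by (rule cinner_add_right[symmetric])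
  then show ?thesis by (simp add: eq_neg_iff_add_eq_0)
qed

lemma cinner_diff_left: "cinner (x - y) (z::'a::cinner_space) = cinner x z - cinner y z"
  by (simp only: diff_conv_add_uminus cinner_add_left cinner_minus_left)

lemma cinner_diff_right: "cinner x (y - z::'a::cinner_space) = cinner x y - cinner x z"
  by (simp only: diff_conv_add_uminus cinner_add_right cinner_minus_right)

lemma cinner_sum_left: "cinner (\<Sum>k\<in>A. f k) (y::'a::cinner_space) = (\<Sum>k\<in>A. cinner (f k) y)"
  by (induction A rule: infinite_finite_induct) (auto simp: cinner_add_left)

lemma cinner_sum_right: "cinner y (\<Sum>k\<in>A. f k) = (\<Sum>k\<in>A. cinner (y::'a::cinner_space) (f k))"
  by (induction A rule: infinite_finite_induct) (auto simp: cinner_add_right)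

lemma cinner_scaleR_left: "cinner (r *\<^sub>R x) (y::'a::cinner_space) = of_real r * cinner x y"
  by (simp only: scaleR_scaleC cinner_scaleC_left)

lemma cinner_scaleR_right: "cinner x (r *\<^sub>R y::'a::cinner_space) = of_real r * cinner x y"
  by (simp only: scaleR_scaleC cinner_scaleC_right complex_cnj_complex_of_real)


lemma cinner_self_eq: "cinner x x = complex_of_real ((norm (x::'a::cinner_space))\<^sup>2)"
proof -
  have "norm x ^ 2 = Re (cinner x x)"
    using norm_eq_sqrt_cinner[of x] cinner_self_nonneg[of x] by simp
  then show ?thesis using cinner_self_real[of x] by (simp add: complex_eq_iff)
qed

lemma Re_cinner_self: "Re (cinner x x) = (norm (x::'a::cinner_space))\<^sup>2"
  by (simp add: cinner_self_eq)

lemma cinner_expand: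
  "cinner (v - c *\<^sub>C n) (v - c *\<^sub>C n) =
   cinner v v - cnj c * cinner v n - c * cinner n v + c * cnj c * cinner n (n::'a::cinner_space)"
  by (simp add: cinner_diff_left cinner_diff_right cinner_scaleC_left cinner_scaleC_right algebra_simps)

lemma Re_cinner_expand:
  "(norm (v - c *\<^sub>C n))\<^sup>2 = (norm v)\<^sup>2 - 2 * Re (cnj c * cinner v n) + (cmod c)\<^sup>2 * (norm (n::'a::cinner_space))\<^sup>2"
proof -
  have 1: "Re (c * cinner n v) = Re (cnj c * cinner v n)"
  proof -
    have e: "cinner n v = cnj (cinner v n)" by (rule cinner_commute)
    have "c * cinner n v = cnj (cnj c * cinner v n)"
      by (simp only: e complex_cnj_mult complex_cnj_cnj)
    then show ?thesis by (simp only: cnj.sel)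
  qed
  have 2: "c * cnj c = complex_of_real ((cmod c)\<^sup>2)" by (rule complex_norm_square[symmetric])
  have "Re (cinner (v - c *\<^sub>C n) (v - c *\<^sub>C n)) =
        Re (cinner v v) - Re (cnj c * cinner v n) - Re (c * cinner n v) + Re (c * cnj c * cinner n n)"
    by (simp only: cinner_expand minus_complex.sel plus_complex.sel)
  also have "Re (c * cnj c * cinner n n) = (cmod c)\<^sup>2 * (norm n)\<^sup>2"
    by (simp only: 2 cinner_self_eq) simp
  finally show ?thesis by (simp only: Re_cinner_self 1)
qed

lemma cauchy_schwarz: "cmod (cinner x y) \<le> norm x * norm (y::'a::cinner_space)"
proof (cases "y = 0")
  case True then show ?thesis by simp
next
  case False
  let ?a = "cinner x y"
  define t where "t = 1 / (norm y)\<^sup>2"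
  have ny: "norm y > 0" using False by simp
  have "0 \<le> (norm (x - (of_real t * ?a) *\<^sub>C y))\<^sup>2" by simp
  also have "\<dots> = (norm x)\<^sup>2 - 2 * Re (cnj (of_real t * ?a) * ?a) + (cmod (of_real t * ?a))\<^sup>2 * (norm y)\<^sup>2"
    by (rule Re_cinner_expand)
  also have "cnj (of_real t * ?a) * ?a = of_real t * (?a * cnj ?a)" by simp
  also have "\<dots> = of_real (t * (cmod ?a)\<^sup>2)"
    by (simp only: complex_norm_square[symmetric] of_real_mult)
  also have "(cmod (of_real t * ?a))\<^sup>2 = t\<^sup>2 * (cmod ?a)\<^sup>2"
    by (simp only: norm_mult norm_of_real power_mult_distrib power2_abs)
  finally have "0 \<le> (norm x)\<^sup>2 - 2 * (t * (cmod ?a)\<^sup>2) + t\<^sup>2 * (cmod ?a)\<^sup>2 * (norm y)\<^sup>2" by simp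
  also have "t\<^sup>2 * (cmod ?a)\<^sup>2 * (norm y)\<^sup>2 = t * (cmod ?a)\<^sup>2"
    using ny by (simp add: t_def power2_eq_square)
  finally have "t * (cmod ?a)\<^sup>2 \<le> (norm x)\<^sup>2" by simp
  then have "(cmod ?a)\<^sup>2 \<le> (norm x)\<^sup>2 * (norm y)\<^sup>2"
    using ny by (simp add: t_def field_simps)
  then have "(cmod ?a)\<^sup>2 \<le> (norm x * norm y)\<^sup>2" by (simp add: power_mult_distrib)
  then show ?thesis by (simp add: power2_le_iff_abs_le)
qed

lemma bounded_bilinear_cinner: "bounded_bilinear (cinner :: 'a::cinner_space \<Rightarrow> 'a \<Rightarrow> complex)"
proof
  fix a a' b b' :: 'a and r :: real
  show "cinner (a + a') b = cinner a b + cinner a' b" by (rule cinner_add_left)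
  show "cinner a (b + b') = cinner a b + cinner a b'" by (rule cinner_add_right)
  show "cinner (r *\<^sub>R a) b = r *\<^sub>R cinner a b" by (simp add: cinner_scaleR_left scaleR_conv_of_real)
  show "cinner a (r *\<^sub>R b) = r *\<^sub>R cinner a b" by (simp add: cinner_scaleR_right scaleR_conv_of_real)
next
  show "\<exists>K. \<forall>a b. norm (cinner a b) \<le> norm (a::'a) * norm b * K"
    by (rule exI[of _ 1]) (simp add: cauchy_schwarz)
qed

lemmas tendsto_cinner = bounded_bilinear.tendsto[OF bounded_bilinear_cinner]

lemma cinner_self_zero_iff: "cinner x x = 0 \<longleftrightarrow> (x::'a::cinner_space) = 0"
  by (rule cinner_self_eq_zero)

lemma parallelogram:
  "(norm (a + b))\<^sup>2 + (norm (a - b))\<^sup>2 = 2 * (norm a)\<^sup>2 + 2 * (norm (b::'a::cinner_space))\<^sup>2"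
proof -
  have "cinner (a + b) (a + b) + cinner (a - b) (a - b) = 2 * cinner a a + 2 * cinner b b"
    by (simp add: cinner_add_left cinner_add_right cinner_diff_left cinner_diff_right algebra_simps)
  then have "Re (cinner (a + b) (a + b)) + Re (cinner (a - b) (a - b)) = 2 * Re (cinner a a) + 2 * Re (cinner b b)"
    by (metis plus_complex.sel(1) Re_complex_of_real mult_2 of_real_add)
  then show ?thesis by (simp only: Re_cinner_self)
qed


section \<open>Bounded operators\<close>

lemma bops_add: "C \<in> bops UNIV \<Longrightarrow> C (x + y) = C x + C y"
  by (simp add: bops_def clinear_on_def)

lemma bops_scaleC: "C \<in> bops UNIV \<Longrightarrow> C (a *\<^sub>C x) = a *\<^sub>C C x"
  by (simp add: bops_def clinear_on_def)

lemma bops_zero: "C \<in> bops UNIV \<Longrightarrow> C 0 = 0"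
  using bops_scaleC[of C 0 0] by simp

lemma bops_minus: "C \<in> bops UNIV \<Longrightarrow> C (- x) = - C x"
proof -
  assume C: "C \<in> bops UNIV"
  have "C x + C (- x) = C (x + - x)" using C by (simp only: bops_add)
  also have "\<dots> = 0" using C by (simp add: bops_zero)
  finally show ?thesis by (simp add: eq_neg_iff_add_eq_0 add.commute)
qed

lemma bops_diff: "C \<in> bops UNIV \<Longrightarrow> C (x - y) = C x - C y"
  by (simp only: diff_conv_add_uminus bops_add bops_minus)

lemma bops_sum: "C \<in> bops UNIV \<Longrightarrow> C (\<Sum>k\<in>A. f k) = (\<Sum>k\<in>A. C (f k))"
  by (induction A rule: infinite_finite_induct) (auto simp: bops_add bops_zero)

lemma bops_bound: "C \<in> bops UNIV \<Longrightarrow> \<exists>c\<ge>0. \<forall>x. norm (C x) \<le> c * norm x"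
proof -
  assume "C \<in> bops UNIV"
  then obtain c where c: "\<forall>x. norm (C x) \<le> c * norm x" by (auto simp: bops_def)
  have "\<forall>x. norm (C x) \<le> max c 0 * norm x"
  proof
    fix x :: 'a
    have "c * norm x \<le> max c 0 * norm x" by (intro mult_right_mono) auto
    then show "norm (C x) \<le> max c 0 * norm x" using c[rule_format, of x] by linarith
  qed
  then show ?thesis by (intro exI[of _ "max c 0"]) auto
qed

lemma bops_bounded_linear: "C \<in> bops UNIV \<Longrightarrow> bounded_linear C"
proof -
  assume C: "C \<in> bops UNIV"
  then obtain c where c: "\<forall>x. norm (C x) \<le> c * norm x" by (auto simp: bops_def)
  show ?thesis
  proof (rule bounded_linear_intro[of _ c])
    fix x y show "C (x + y) = C x + C y" using C by (rule bops_add)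
  next
    fix r x show "C (r *\<^sub>R x) = r *\<^sub>R C x" using C by (simp add: scaleR_scaleC bops_scaleC)
  next
    fix x show "norm (C x) \<le> norm x * c" using c by (simp add: mult.commute)
  qed
qed

lemma bops_tendsto: "C \<in> bops UNIV \<Longrightarrow> f \<longlonglongrightarrow> a \<Longrightarrow> (\<lambda>n. C (f n)) \<longlonglongrightarrow> C a"
  using bops_bounded_linear bounded_linear.tendsto by blast

lemma bops_continuous_on: "C \<in> bops UNIV \<Longrightarrow> continuous_on S C"
  using bops_bounded_linear linear_continuous_on by blast

lemma bops_comp: "C \<in> bops UNIV \<Longrightarrow> C' \<in> bops UNIV \<Longrightarrow> C \<circ> C' \<in> bops UNIV"
proof -
  assume C: "C \<in> bops UNIV" and C': "C' \<in> bops UNIV"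
  obtain c where c: "c \<ge> 0" "\<forall>x. norm (C x) \<le> c * norm x" using bops_bound[OF C] by auto
  obtain c' where c': "\<forall>x. norm (C' x) \<le> c' * norm x" using C' by (auto simp: bops_def)
  have "\<forall>x. norm (C (C' x)) \<le> (c * c') * norm x"
  proof
    fix x
    have "norm (C (C' x)) \<le> c * norm (C' x)" using c by auto
    also have "\<dots> \<le> c * (c' * norm x)" using c c' by (simp add: mult_left_mono)
    finally show "norm (C (C' x)) \<le> (c * c') * norm x" by (simp add: mult.assoc)
  qed
  then have "\<exists>k. \<forall>x\<in>UNIV. norm ((C \<circ> C') x) \<le> k * norm x" by auto
  moreover have "clinear_on UNIV (C \<circ> C')" using C C' by (simp add: clinear_on_def bops_add bops_scaleC)
  ultimately show ?thesis unfolding bops_def by simp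
qed

lemma bops_id: "(\<lambda>x. x) \<in> bops UNIV"
proof -
  have "\<forall>x\<in>UNIV. norm x \<le> 1 * norm (x::'a)" by simp
  then show ?thesis unfolding bops_def clinear_on_def by blast
qed


section \<open>Projection theorem and Riesz representation\<close>

lemma csubspace_diff: "csubspace N \<Longrightarrow> a \<in> N \<Longrightarrow> b \<in> N \<Longrightarrow> a - b \<in> N"
proof -
  assume s: "csubspace N" and a: "a \<in> N" and b: "b \<in> N"
  have "(-1) *\<^sub>C b \<in> N" using s b by (simp add: csubspace_def)
  then have "- b \<in> N" by (simp add: scaleC_minus_left scaleC_one)
  moreover have "\<forall>x\<in>N. \<forall>y\<in>N. x + y \<in> N" using s by (simp add: csubspace_def)
  ultimately have "a + - b \<in> N" using a by blast
  then show ?thesis by (simp only: diff_conv_add_uminus)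
qed

lemma csubspace_scaleR: "csubspace N \<Longrightarrow> a \<in> N \<Longrightarrow> r *\<^sub>R a \<in> N"
  unfolding csubspace_def by (simp add: scaleR_scaleC)

lemma proj_orth:
  fixes N :: "'h::chilbert_space set"
  assumes cl: "closed N" and sub: "csubspace N" and xN: "x \<notin> N"
  shows "\<exists>w. w \<noteq> 0 \<and> (\<forall>n\<in>N. cinner n w = 0)"
proof -
  have N0: "0 \<in> N" and Nadd: "\<And>a b. a \<in> N \<Longrightarrow> b \<in> N \<Longrightarrow> a + b \<in> N"
    and NC: "\<And>c a. a \<in> N \<Longrightarrow> c *\<^sub>C a \<in> N"
    using sub by (auto simp: csubspace_def)
  define S where "S = (\<lambda>n. norm (x - n)) ` N"
  define d where "d = Inf S"
  have Sne: "S \<noteq> {}" using N0 by (auto simp: S_def)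
  have bdd: "bdd_below S" by (auto simp: S_def intro!: bdd_belowI[of _ 0])
  have low: "\<And>n. n \<in> N \<Longrightarrow> d \<le> norm (x - n)"
    unfolding d_def S_def by (rule cInf_lower) (use bdd S_def in auto)
  have d0: "0 \<le> d" unfolding d_def using Sne by (auto intro!: cInf_greatest simp: S_def)
  define e where "e k = inverse (real (Suc k))" for k :: nat
  have epos: "\<And>k. e k > 0" by (simp add: e_def)
  have "\<forall>k. \<exists>n\<in>N. norm (x - n) < d + e k"
  proof
    fix k
    have "Inf S < d + e k" using epos[of k] by (simp add: d_def)
    then obtain s where "s \<in> S" "s < d + e k" using cInf_less_iff[OF Sne bdd] by auto
    then show "\<exists>n\<in>N. norm (x - n) < d + e k" by (auto simp: S_def)
  qed
  then obtain p where pN: "\<And>k. p k \<in> N" and pd: "\<And>k. norm (x - p k) < d + e k" by metis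
  have key: "(norm (p k - p j))\<^sup>2 \<le> 2 * (d + e k)\<^sup>2 + 2 * (d + e j)\<^sup>2 - 4 * d\<^sup>2" for k j
  proof -
    define a where "a = x - p k"
    define b where "b = x - p j"
    define m where "m = (1/2::real) *\<^sub>R (p k + p j)"
    have mN: "m \<in> N" unfolding m_def by (intro csubspace_scaleR[OF sub] Nadd pN)
    have "2 *\<^sub>R (x - m) = 2 *\<^sub>R x - p k - p j"
      by (simp add: m_def scaleR_diff_right scaleR_add_right)
    then have ab: "a + b = 2 *\<^sub>R (x - m)"
      by (simp add: a_def b_def scaleR_2)
    have "2 * d \<le> norm (a + b)" using low[OF mN] by (simp add: ab)
    then have "(2 * d)\<^sup>2 \<le> (norm (a + b))\<^sup>2" using d0 by (intro power_mono) auto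
    then have h1: "4 * d\<^sup>2 \<le> (norm (a + b))\<^sup>2" by (simp add: power_mult_distrib)
    have h2: "(norm a)\<^sup>2 \<le> (d + e k)\<^sup>2" using pd[of k] by (intro power_mono) (auto simp: a_def)
    have h3: "(norm b)\<^sup>2 \<le> (d + e j)\<^sup>2" using pd[of j] by (intro power_mono) (auto simp: b_def)
    have "norm (p k - p j) = norm (a - b)" by (simp add: a_def b_def norm_minus_commute)
    then have "(norm (p k - p j))\<^sup>2 = (norm (a - b))\<^sup>2" by simp
    then show ?thesis using parallelogram[of a b] h1 h2 h3 by linarith
  qed
  have "Cauchy p"
  proof (rule CauchyI)
    fix \<epsilon> :: real assume \<epsilon>: "0 < \<epsilon>"
    define \<delta> where "\<delta> = min 1 (\<epsilon>\<^sup>2 / (8 * d + 5))"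
    have \<delta>0: "0 < \<delta>" using \<epsilon> d0 by (simp add: \<delta>_def)
    have \<delta>1: "\<delta> \<le> 1" by (simp add: \<delta>_def)
    have "\<delta> \<le> \<epsilon>\<^sup>2 / (8 * d + 5)" by (simp add: \<delta>_def)
    then have \<delta>2: "\<delta> * (8 * d + 5) \<le> \<epsilon>\<^sup>2" using d0 by (simp add: pos_le_divide_eq)
    obtain M where M: "inverse (real (Suc M)) < \<delta>" using reals_Archimedean[OF \<delta>0] by auto
    have emono: "\<And>k. k \<ge> M \<Longrightarrow> e k < \<delta>"
    proof -
      fix k assume "k \<ge> M"
      then have "e k \<le> inverse (real (Suc M))" by (simp add: e_def le_imp_inverse_le)
      then show "e k < \<delta>" using M by linarith
    qed
    show "\<exists>M. \<forall>m\<ge>M. \<forall>n\<ge>M. norm (p m - p n) < \<epsilon>"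
    proof (intro exI allI impI)
      fix m n assume mM: "m \<ge> M" and nM: "n \<ge> M"
      have em: "(d + e m)\<^sup>2 \<le> (d + \<delta>)\<^sup>2" using emono[OF mM] epos[of m] d0
        by (intro power_mono) auto
      have en: "(d + e n)\<^sup>2 \<le> (d + \<delta>)\<^sup>2" using emono[OF nM] epos[of n] d0
        by (intro power_mono) auto
      have "(norm (p m - p n))\<^sup>2 \<le> 4 * (d + \<delta>)\<^sup>2 - 4 * d\<^sup>2" using key[of m n] em en by linarith
      also have "\<dots> = 8 * d * \<delta> + 4 * \<delta>\<^sup>2" by (simp add: power2_eq_square algebra_simps)
      also have "\<dots> \<le> 8 * d * \<delta> + 4 * \<delta>" using \<delta>0 \<delta>1 by (simp add: power2_eq_square mult_left_le_one_le)
      also have "\<dots> < \<delta> * (8 * d + 5)" using \<delta>0 by (simp add: algebra_simps)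
      also have "\<dots> \<le> \<epsilon>\<^sup>2" by (rule \<delta>2)
      finally have "(norm (p m - p n))\<^sup>2 < \<epsilon>\<^sup>2" .
      then show "norm (p m - p n) < \<epsilon>" using \<epsilon> by (simp add: power_less_imp_less_base)
    qed
  qed
  then obtain q where pq: "p \<longlonglongrightarrow> q" by (auto simp: Cauchy_convergent_iff convergent_def)
  have qN: "q \<in> N" using closed_sequentially[OF cl] pN pq by blast
  have "norm (x - q) \<le> d"
  proof (rule LIMSEQ_le)
    show "(\<lambda>k. norm (x - p k)) \<longlonglongrightarrow> norm (x - q)" by (intro tendsto_intros pq)
    show "(\<lambda>k. d + e k) \<longlonglongrightarrow> d" unfolding e_def
      using tendsto_add[OF tendsto_const LIMSEQ_inverse_real_of_nat, of d] by simp
    show "\<exists>N. \<forall>n\<ge>N. norm (x - p n) \<le> d + e n" using pd less_imp_le by blast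
  qed
  then have best: "\<And>n. n \<in> N \<Longrightarrow> norm (x - q) \<le> norm (x - n)" using low by force
  define w where "w = x - q"
  have w0: "w \<noteq> 0" using xN qN by (auto simp: w_def)
  have orth: "cinner n w = 0" if nN: "n \<in> N" for n
  proof (rule ccontr)
    assume "cinner n w \<noteq> 0"
    then have a0: "cinner w n \<noteq> 0" by (subst cinner_commute) simp
    let ?a = "cinner w n"
    define t where "t = 1 / ((norm n)\<^sup>2 + 1)"
    have "(norm n)\<^sup>2 + 1 > 0" by (simp add: add_nonneg_pos)
    then have t0: "t > 0" by (simp add: t_def)
    define c where "c = of_real t * ?a"
    have "q + c *\<^sub>C n \<in> N" using qN nN by (intro Nadd NC)
    then have "norm w \<le> norm (x - (q + c *\<^sub>C n))" using best by (simp add: w_def)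
    also have "x - (q + c *\<^sub>C n) = w - c *\<^sub>C n" by (simp add: w_def)
    finally have "(norm w)\<^sup>2 \<le> (norm (w - c *\<^sub>C n))\<^sup>2" by (simp add: power_mono)
    also have "\<dots> = (norm w)\<^sup>2 - 2 * Re (cnj c * ?a) + (cmod c)\<^sup>2 * (norm n)\<^sup>2"
      by (rule Re_cinner_expand)
    also have "cnj c * ?a = of_real t * (?a * cnj ?a)" by (simp add: c_def)
    also have "\<dots> = of_real (t * (cmod ?a)\<^sup>2)"
      by (simp only: complex_norm_square[symmetric] of_real_mult)
    also have "(cmod c)\<^sup>2 = t\<^sup>2 * (cmod ?a)\<^sup>2"
      unfolding c_def by (simp only: norm_mult norm_of_real power_mult_distrib power2_abs)
    finally have "2 * (t * (cmod ?a)\<^sup>2) \<le> t\<^sup>2 * (cmod ?a)\<^sup>2 * (norm n)\<^sup>2" by simp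
    then have "2 * (t * (cmod ?a)\<^sup>2) \<le> (t * (cmod ?a)\<^sup>2) * (t * (norm n)\<^sup>2)"
      by (simp add: power2_eq_square algebra_simps)
    moreover have "t * (cmod ?a)\<^sup>2 > 0" using t0 a0 by simp
    ultimately have "2 \<le> t * (norm n)\<^sup>2"
      using mult_le_cancel_left_pos[of "t * (cmod ?a)\<^sup>2" 2 "t * (norm n)\<^sup>2"] by (simp add: mult.commute)
    moreover have "t * (norm n)\<^sup>2 < 1"
    proof -
      have p: "(norm n)\<^sup>2 + 1 > 0" by (simp add: add_nonneg_pos)
      have "(norm n)\<^sup>2 < 1 * ((norm n)\<^sup>2 + 1)" by simp
      then show ?thesis using p by (simp add: t_def divide_less_eq)
    qed
    ultimately show False by simp
  qed
  show ?thesis using w0 orth by blast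
qed

lemma riesz:
  fixes \<phi> :: "'h::chilbert_space \<Rightarrow> complex"
  assumes add: "\<And>x y. \<phi> (x + y) = \<phi> x + \<phi> y"
    and sc: "\<And>c x. \<phi> (c *\<^sub>C x) = c * \<phi> x"
    and bd: "\<And>x. cmod (\<phi> x) \<le> K * norm x"
  shows "\<exists>z. \<forall>x. \<phi> x = cinner x z"
proof -
  have bl: "bounded_linear \<phi>"
  proof (rule bounded_linear_intro[of _ K])
    fix x y show "\<phi> (x + y) = \<phi> x + \<phi> y" by (rule add)
  next
    fix r x show "\<phi> (r *\<^sub>R x) = r *\<^sub>R \<phi> x" by (simp add: scaleR_scaleC sc scaleC_complex_def)
  next
    fix x show "norm (\<phi> x) \<le> norm x * K" using bd[of x] by (simp add: mult.commute)
  qed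
  have p0: "\<phi> 0 = 0" using sc[of 0 0] by simp
  show ?thesis
  proof (cases "\<forall>x. \<phi> x = 0")
    case True then show ?thesis by (intro exI[of _ 0]) simp
  next
    case False
    then obtain x0 where x0: "\<phi> x0 \<noteq> 0" by auto
    define N where "N = {x. \<phi> x = 0}"
    have cl: "closed N" unfolding N_def
      by (rule closed_Collect_eq) (auto intro: linear_continuous_on[OF bl])
    have sub: "csubspace N" by (auto simp: N_def csubspace_def p0 add sc)
    obtain w where w0: "w \<noteq> 0" and wo: "\<And>n. n \<in> N \<Longrightarrow> cinner n w = 0"
      using proj_orth[OF cl sub, of x0] x0 by (auto simp: N_def)
    have ww: "cinner w w \<noteq> 0" using w0 cinner_self_eq_zero by blast
    have pw: "\<phi> w \<noteq> 0"
    proof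
      assume "\<phi> w = 0" then have "w \<in> N" by (simp add: N_def)
      then show False using wo ww by blast
    qed
    define z where "z = cnj (\<phi> w / cinner w w) *\<^sub>C w"
    show ?thesis
    proof (intro exI allI)
      fix x
      have "x - (\<phi> x / \<phi> w) *\<^sub>C w \<in> N"
      proof -
        let ?y = "(\<phi> x / \<phi> w) *\<^sub>C w"
        have e1: "\<phi> x = \<phi> (x - ?y) + \<phi> ?y" using add[of "x - ?y" ?y] by simp
        have e2: "\<phi> ?y = \<phi> x" using pw by (simp add: sc)
        have "\<phi> (x - ?y) = 0" using e1 e2 by simp
        then show ?thesis by (simp add: N_def)
      qed
      then have "cinner (x - (\<phi> x / \<phi> w) *\<^sub>C w) w = 0" by (rule wo)
      then have xw: "cinner x w = (\<phi> x / \<phi> w) * cinner w w"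
        by (simp add: cinner_diff_left cinner_scaleC_left)
      have "cinner x z = (\<phi> w / cinner w w) * cinner x w"
        by (simp add: z_def cinner_scaleC_right)
      also have "\<dots> = \<phi> x" using xw ww pw by simp
      finally show "\<phi> x = cinner x z" by simp
    qed
  qed
qed

lemma cinner_ext_right: "(\<And>x. cinner x a = cinner x b) \<Longrightarrow> a = (b::'a::cinner_space)"
proof -
  assume h: "\<And>x. cinner x a = cinner x b"
  have "cinner (a - b) (a - b) = cinner (a - b) a - cinner (a - b) b" by (rule cinner_diff_right)
  also have "\<dots> = 0" using h[of "a - b"] by simp
  finally have "a - b = 0" using cinner_self_eq_zero by blast
  then show ?thesis by simp
qed

definition cadj :: "('h::chilbert_space \<Rightarrow> 'h) \<Rightarrow> 'h \<Rightarrow> 'h" where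
  "cadj C y = (SOME z. \<forall>x. cinner (C x) y = cinner x z)"

lemma cadj: assumes C: "C \<in> bops UNIV" shows "cinner (C x) y = cinner x (cadj C y)"
proof -
  obtain c where c: "c \<ge> 0" "\<forall>x. norm (C x) \<le> c * norm x" using bops_bound[OF C] by auto
  have "\<exists>z. \<forall>x. cinner (C x) y = cinner x z"
  proof (rule riesz[of _ "c * norm y"])
    fix x x' show "cinner (C (x + x')) y = cinner (C x) y + cinner (C x') y"
      using C by (simp add: bops_add cinner_add_left)
  next
    fix a x show "cinner (C (a *\<^sub>C x)) y = a * cinner (C x) y"
      using C by (simp add: bops_scaleC cinner_scaleC_left)
  next
    fix x
    have "cmod (cinner (C x) y) \<le> norm (C x) * norm y" by (rule cauchy_schwarz)
    also have "\<dots> \<le> c * norm x * norm y" using c by (simp add: mult_right_mono)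
    finally show "cmod (cinner (C x) y) \<le> c * norm y * norm x" by (simp add: algebra_simps)
  qed
  then have "\<forall>x. cinner (C x) y = cinner x (cadj C y)" unfolding cadj_def by (rule someI_ex)
  then show ?thesis by blast
qed

lemma cadj_bops: assumes C: "C \<in> bops UNIV" shows "cadj C \<in> bops UNIV"
proof -
  obtain c where c: "c \<ge> 0" "\<forall>x. norm (C x) \<le> c * norm x" using bops_bound[OF C] by auto
  have lin1: "cadj C (y + z) = cadj C y + cadj C z" for y z
    by (rule cinner_ext_right) (simp add: cadj[OF C, symmetric] cinner_add_right)
  have lin2: "cadj C (a *\<^sub>C y) = a *\<^sub>C cadj C y" for a y
    by (rule cinner_ext_right) (simp add: cadj[OF C, symmetric] cinner_scaleC_right)
  have bd: "norm (cadj C y) \<le> c * norm y" for y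
  proof -
    let ?z = "cadj C y"
    have "(norm ?z)\<^sup>2 = Re (cinner ?z ?z)" by (simp add: Re_cinner_self)
    also have "cinner ?z ?z = cinner (C ?z) y" by (simp add: cadj[OF C])
    also have "Re (cinner (C ?z) y) \<le> cmod (cinner (C ?z) y)" by (rule complex_Re_le_cmod)
    also have "\<dots> \<le> norm (C ?z) * norm y" by (rule cauchy_schwarz)
    also have "\<dots> \<le> c * norm ?z * norm y" using c by (simp add: mult_right_mono)
    finally have h: "norm ?z * norm ?z \<le> norm ?z * (c * norm y)" by (simp add: power2_eq_square algebra_simps)
    show ?thesis
    proof (cases "norm ?z = 0")
      case True then show ?thesis using c by simp
    next
      case False then show ?thesis using h by (simp add: mult_le_cancel_left)
    qed
  qed
  show ?thesis by (auto simp: bops_def clinear_on_def lin1 lin2 intro!: exI[of _ c] bd)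
qed

lemma cadj_left: "C \<in> bops UNIV \<Longrightarrow> cinner (cadj C y) x = cinner y (C x)"
  by (metis cadj cinner_commute)


section \<open>Adjoints relative to a domain\<close>

definition sepr :: "'h::chilbert_space set \<Rightarrow> bool" where
  "sepr S \<longleftrightarrow> (\<forall>a\<in>S. \<forall>b\<in>S. (\<forall>\<xi>\<in>S. cinner \<xi> a = cinner \<xi> b) \<longrightarrow> a = b)"

lemma adj_prop:
  assumes sep: "sepr S" and X: "X \<in> ldag S" and eta: "\<eta> \<in> S"
  shows "adj S X \<eta> \<in> S \<and> (\<forall>\<xi>\<in>S. cinner (X \<xi>) \<eta> = cinner \<xi> (adj S X \<eta>))"
proof -
  have "\<forall>\<eta>\<in>S. \<exists>\<zeta>\<in>S. \<forall>\<xi>\<in>S. cinner (X \<xi>) \<eta> = cinner \<xi> \<zeta>"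
    using X unfolding ldag_def by blast
  then obtain \<zeta> where z: "\<zeta> \<in> S" "\<forall>\<xi>\<in>S. cinner (X \<xi>) \<eta> = cinner \<xi> \<zeta>"
    using eta by blast
  have uq: "\<zeta>' = \<zeta>" if "\<zeta>' \<in> S \<and> (\<forall>\<xi>\<in>S. cinner (X \<xi>) \<eta> = cinner \<xi> \<zeta>')" for \<zeta>'
  proof -
    have "\<forall>\<xi>\<in>S. cinner \<xi> \<zeta>' = cinner \<xi> \<zeta>" using that z by auto
    moreover have "\<zeta>' \<in> S" using that by blast
    ultimately show ?thesis using sep z(1) unfolding sepr_def by blast
  qed
  have "(THE \<zeta>. \<zeta> \<in> S \<and> (\<forall>\<xi>\<in>S. cinner (X \<xi>) \<eta> = cinner \<xi> \<zeta>)) = \<zeta>"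
    by (rule the_equality) (use z uq in blast)+
  then have "adj S X \<eta> = \<zeta>" using eta by (simp add: adj_def)
  then show ?thesis using z by simp
qed

lemma adj_mem: "sepr S \<Longrightarrow> X \<in> ldag S \<Longrightarrow> \<eta> \<in> S \<Longrightarrow> adj S X \<eta> \<in> S"
  using adj_prop by blast

lemma adj_eq: "sepr S \<Longrightarrow> X \<in> ldag S \<Longrightarrow> \<eta> \<in> S \<Longrightarrow> \<xi> \<in> S \<Longrightarrow> cinner (X \<xi>) \<eta> = cinner \<xi> (adj S X \<eta>)"
  using adj_prop by blast

lemma adj_eq': "sepr S \<Longrightarrow> X \<in> ldag S \<Longrightarrow> \<eta> \<in> S \<Longrightarrow> \<xi> \<in> S \<Longrightarrow> cinner (adj S X \<eta>) \<xi> = cinner \<eta> (X \<xi>)"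
proof -
  assume a: "sepr S" "X \<in> ldag S" "\<eta> \<in> S" "\<xi> \<in> S"
  have "cinner (adj S X \<eta>) \<xi> = cnj (cinner \<xi> (adj S X \<eta>))" by (rule cinner_commute)
  also have "\<dots> = cnj (cinner (X \<xi>) \<eta>)" using adj_eq[OF a] by simp
  also have "\<dots> = cinner \<eta> (X \<xi>)" by (simp flip: cinner_commute)
  finally show ?thesis .
qed

lemma adj_unique:
  assumes sep: "sepr S" and X: "X \<in> ldag S" and eta: "\<eta> \<in> S" and z: "\<zeta> \<in> S"
    and h: "\<forall>\<xi>\<in>S. cinner (X \<xi>) \<eta> = cinner \<xi> \<zeta>"
  shows "adj S X \<eta> = \<zeta>"
proof -
  have "\<forall>\<xi>\<in>S. cinner \<xi> (adj S X \<eta>) = cinner \<xi> \<zeta>" using adj_prop[OF sep X eta] h by auto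
  then show ?thesis using sep adj_mem[OF sep X eta] z unfolding sepr_def by blast
qed

lemma adj_outside: "\<eta> \<notin> S \<Longrightarrow> adj S X \<eta> = 0"
  by (simp add: adj_def)

lemma ldag_linear: "X \<in> ldag S \<Longrightarrow> clinear_on S X" by (simp add: ldag_def)
lemma ldag_add: "X \<in> ldag S \<Longrightarrow> a \<in> S \<Longrightarrow> b \<in> S \<Longrightarrow> X (a + b) = X a + X b"
  by (simp add: ldag_def clinear_on_def)
lemma ldag_scaleC: "X \<in> ldag S \<Longrightarrow> a \<in> S \<Longrightarrow> X (c *\<^sub>C a) = c *\<^sub>C X a"
  by (simp add: ldag_def clinear_on_def)
lemma ldag_mem: "X \<in> ldag S \<Longrightarrow> a \<in> S \<Longrightarrow> X a \<in> S"
  unfolding ldag_def by blast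
lemma ldag_out: "X \<in> ldag S \<Longrightarrow> a \<notin> S \<Longrightarrow> X a = 0"
  unfolding ldag_def by blast

lemma adj_ldag:
  assumes sep: "sepr S" and sub: "csubspace S" and X: "X \<in> ldag S"
  shows "adj S X \<in> ldag S" and "\<And>\<xi>. \<xi> \<in> S \<Longrightarrow> adj S (adj S X) \<xi> = X \<xi>"
proof -
  have Sadd: "\<And>a b. a \<in> S \<Longrightarrow> b \<in> S \<Longrightarrow> a + b \<in> S" and SC: "\<And>c a. a \<in> S \<Longrightarrow> c *\<^sub>C a \<in> S"
    using sub unfolding csubspace_def by blast+
  have lin1: "adj S X (a + b) = adj S X a + adj S X b" if ab: "a \<in> S" "b \<in> S" for a b
  proof (rule adj_unique[OF sep X])
    show "a + b \<in> S" using ab by (rule Sadd)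
    show "adj S X a + adj S X b \<in> S" using ab by (intro Sadd adj_mem[OF sep X])
    show "\<forall>\<xi>\<in>S. cinner (X \<xi>) (a + b) = cinner \<xi> (adj S X a + adj S X b)"
      using ab by (simp add: cinner_add_right adj_eq[OF sep X])
  qed
  have lin2: "adj S X (c *\<^sub>C a) = c *\<^sub>C adj S X a" if a: "a \<in> S" for c a
  proof (rule adj_unique[OF sep X])
    show "c *\<^sub>C a \<in> S" using a by (rule SC)
    show "c *\<^sub>C adj S X a \<in> S" using a by (intro SC adj_mem[OF sep X])
    show "\<forall>\<xi>\<in>S. cinner (X \<xi>) (c *\<^sub>C a) = cinner \<xi> (c *\<^sub>C adj S X a)"
      using a by (simp add: cinner_scaleC_right adj_eq[OF sep X])
  qed
  have adj2: "\<forall>\<xi>\<in>S. cinner (adj S X \<xi>) \<eta> = cinner \<xi> (X \<eta>)" if "\<eta> \<in> S" for \<eta>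
    using that by (simp add: adj_eq'[OF sep X])
  have c1: "clinear_on S (adj S X)" unfolding clinear_on_def using lin1 lin2 by blast
  have c2: "adj S X ` S \<subseteq> S" using adj_mem[OF sep X] by blast
  have c3: "\<forall>\<eta>\<in>S. \<exists>\<zeta>\<in>S. \<forall>\<xi>\<in>S. cinner (adj S X \<xi>) \<eta> = cinner \<xi> \<zeta>"
    using adj2 ldag_mem[OF X] by blast
  have c4: "\<forall>x. x \<notin> S \<longrightarrow> adj S X x = 0" by (simp add: adj_outside)
  show AX: "adj S X \<in> ldag S" unfolding ldag_def using c1 c2 c3 c4 by blast
  fix \<xi> assume "\<xi> \<in> S"
  then show "adj S (adj S X) \<xi> = X \<xi>"
    by (intro adj_unique[OF sep AX]) (auto simp: ldag_mem[OF X] adj2)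
qed


definition rd :: "'h::chilbert_space set \<Rightarrow> ('h \<Rightarrow> 'h) \<Rightarrow> ('h \<Rightarrow> 'h) \<Rightarrow> ('h \<Rightarrow> 'h)" where
  "rd D E X = (\<lambda>x. if x \<in> E ` D then X (E x) else 0)"

lemma reduced_alg_rd: "reduced_alg D E N = rd D E ` N"
  by (simp add: reduced_alg_def rd_def)

locale setting =
  fixes D :: "'h::chilbert_space set" and M :: "('h \<Rightarrow> 'h) set" and E Z :: "'h \<Rightarrow> 'h"
  assumes D_sub: "csubspace D"
    and D_dense: "closure D = UNIV"
    and M_Ostar: "is_Ostar_algebra D M"
    and Mc_inv: "\<forall>C\<in>wcomm UNIV D M. C ` D \<subseteq> D"
    and E_proj: "is_proj UNIV E"
    and E_comm: "E \<in> wcomm UNIV D M"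
    and Z_proj: "is_proj UNIV Z"
    and Z_range: "range Z = closure (cspan (\<Union>C\<in>wcomm UNIV D M. range (C \<circ> E)))"
begin

abbreviation "Mc \<equiv> wcomm UNIV D M"
abbreviation "S \<equiv> E ` D"

lemma dense_zero:
  assumes h: "\<And>\<eta>. \<eta> \<in> D \<Longrightarrow> cinner a \<eta> = 0" shows "a = 0"
proof -
  have "a \<in> closure D" using D_dense by simp
  then obtain f where f: "\<And>n. f n \<in> D" "f \<longlonglongrightarrow> a" using closure_sequential by blast
  have "(\<lambda>n. cinner a (f n)) \<longlonglongrightarrow> cinner a a" by (intro tendsto_cinner tendsto_const f)
  moreover have "(\<lambda>n. cinner a (f n)) = (\<lambda>n. 0)" using h f by auto
  ultimately have "cinner a a = 0" using LIMSEQ_const_iff by metis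
  then show ?thesis using cinner_self_eq_zero by blast
qed

lemma dense_eq: "(\<And>\<eta>. \<eta> \<in> D \<Longrightarrow> cinner a \<eta> = cinner b \<eta>) \<Longrightarrow> a = b"
  using dense_zero[of "a - b"] by (simp add: cinner_diff_left)

lemma D0: "0 \<in> D" using D_sub by (simp add: csubspace_def)
lemma Dadd: "a \<in> D \<Longrightarrow> b \<in> D \<Longrightarrow> a + b \<in> D" using D_sub by (simp add: csubspace_def)
lemma DC: "a \<in> D \<Longrightarrow> c *\<^sub>C a \<in> D" using D_sub by (simp add: csubspace_def)
lemma Ddiff: "a \<in> D \<Longrightarrow> b \<in> D \<Longrightarrow> a - b \<in> D" using D_sub by (rule csubspace_diff)

lemma sepr_D: "sepr D"
  unfolding sepr_def
proof (intro ballI impI)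
  fix a b assume "a \<in> D" "b \<in> D" and h: "\<forall>\<xi>\<in>D. cinner \<xi> a = cinner \<xi> b"
  show "a = b"
  proof (rule dense_eq)
    fix \<eta> assume "\<eta> \<in> D"
    then have "cinner \<eta> a = cinner \<eta> b" using h by blast
    then show "cinner a \<eta> = cinner b \<eta>" using cinner_commute[of a \<eta>] cinner_commute[of b \<eta>] by simp
  qed
qed

lemma E_bops: "E \<in> bops UNIV" using E_proj by (simp add: is_proj_def)
lemma E_idem [simp]: "E (E x) = E x" using E_proj by (simp add: is_proj_def)
lemma E_sa: "cinner (E x) y = cinner x (E y)" using E_proj by (simp add: is_proj_def)
lemma Z_bops: "Z \<in> bops UNIV" using Z_proj by (simp add: is_proj_def)
lemma Z_idem [simp]: "Z (Z x) = Z x" using Z_proj by (simp add: is_proj_def)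
lemma Z_sa: "cinner (Z x) y = cinner x (Z y)" using Z_proj by (simp add: is_proj_def)

lemma Mc_bops: "C \<in> Mc \<Longrightarrow> C \<in> bops UNIV" by (simp add: wcomm_def)
lemma Mc_D: "C \<in> Mc \<Longrightarrow> \<xi> \<in> D \<Longrightarrow> C \<xi> \<in> D" using Mc_inv by blast
lemma Mc_comm: "C \<in> Mc \<Longrightarrow> X \<in> M \<Longrightarrow> \<xi> \<in> D \<Longrightarrow> \<eta> \<in> D \<Longrightarrow>
    cinner (C (X \<xi>)) \<eta> = cinner (C \<xi>) (adj D X \<eta>)"
  by (simp add: wcomm_def)

lemma M_ldag: "X \<in> M \<Longrightarrow> X \<in> ldag D" using M_Ostar by (auto simp: is_Ostar_algebra_def)
lemma M_adj: "X \<in> M \<Longrightarrow> adj D X \<in> M" using M_Ostar by (simp add: is_Ostar_algebra_def)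

lemma comm_gen:
  assumes X: "X \<in> ldag D" and C: "C \<in> bops UNIV" and CD: "\<And>\<xi>. \<xi> \<in> D \<Longrightarrow> C \<xi> \<in> D"
    and h: "\<And>\<xi> \<eta>. \<xi> \<in> D \<Longrightarrow> \<eta> \<in> D \<Longrightarrow> cinner (C (X \<xi>)) \<eta> = cinner (C \<xi>) (adj D X \<eta>)"
    and xi: "\<xi> \<in> D"
  shows "C (X \<xi>) = X (C \<xi>)"
proof (rule dense_eq)
  fix \<eta> assume eta: "\<eta> \<in> D"
  have "cinner (C (X \<xi>)) \<eta> = cinner (C \<xi>) (adj D X \<eta>)" using h xi eta by blast
  also have "\<dots> = cinner (X (C \<xi>)) \<eta>" using adj_eq[OF sepr_D X eta CD[OF xi]] by simp
  finally show "cinner (C (X \<xi>)) \<eta> = cinner (X (C \<xi>)) \<eta>" .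
qed

lemma Mc_commute: "C \<in> Mc \<Longrightarrow> X \<in> M \<Longrightarrow> \<xi> \<in> D \<Longrightarrow> C (X \<xi>) = X (C \<xi>)"
  by (rule comm_gen) (auto simp: M_ldag Mc_bops Mc_D Mc_comm)

lemma Mc_comp: assumes C: "C \<in> Mc" and C': "C' \<in> Mc" shows "C \<circ> C' \<in> Mc"
proof -
  have "cinner (C (C' (X \<xi>))) \<eta> = cinner (C (C' \<xi>)) (adj D X \<eta>)"
    if "X \<in> M" "\<xi> \<in> D" "\<eta> \<in> D" for X \<xi> \<eta>
    using that by (simp add: Mc_commute[OF C'] Mc_comm[OF C] Mc_D[OF C'])
  then show ?thesis using C C' by (simp add: wcomm_def bops_comp)
qed

lemma Mc_id: "(\<lambda>x. x) \<in> Mc"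
  by (simp add: wcomm_def bops_id adj_eq[OF sepr_D] M_ldag)

lemma Mc_cadj: assumes C: "C \<in> Mc" shows "cadj C \<in> Mc"
proof -
  have CB: "C \<in> bops UNIV" using C by (rule Mc_bops)
  have "cinner (cadj C (X \<xi>)) \<eta> = cinner (cadj C \<xi>) (adj D X \<eta>)"
    if X: "X \<in> M" and xi: "\<xi> \<in> D" and eta: "\<eta> \<in> D" for X \<xi> \<eta>
  proof -
    have "cinner (cadj C (X \<xi>)) \<eta> = cinner (X \<xi>) (C \<eta>)" by (rule cadj_left[OF CB])
    also have "\<dots> = cinner \<xi> (adj D X (C \<eta>))" using adj_eq[OF sepr_D M_ldag[OF X] Mc_D[OF C eta] xi] .
    also have "adj D X (C \<eta>) = C (adj D X \<eta>)" using Mc_commute[OF C M_adj[OF X] eta] by simp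
    also have "cinner \<xi> (C (adj D X \<eta>)) = cinner (cadj C \<xi>) (adj D X \<eta>)" by (rule cadj_left[OF CB, symmetric])
    finally show ?thesis .
  qed
  then show ?thesis using cadj_bops[OF CB] by (simp add: wcomm_def)
qed

lemma E_Mc: "E \<in> Mc" by (rule E_comm)

lemma S_D: "x \<in> S \<Longrightarrow> x \<in> D" using Mc_D[OF E_Mc] by auto
lemma S_E: "x \<in> S \<Longrightarrow> E x = x" by auto
lemma ES: "\<xi> \<in> D \<Longrightarrow> E \<xi> \<in> S" by auto

lemma S_sub: "csubspace S"
proof -
  have "E 0 = 0" by (rule bops_zero[OF E_bops])
  then have "0 \<in> S" using D0 by (metis image_eqI)
  moreover have "\<forall>x\<in>S. \<forall>y\<in>S. x + y \<in> S"
  proof (intro ballI)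
    fix x y assume "x \<in> S" "y \<in> S"
    then obtain a b where ab: "a \<in> D" "b \<in> D" "x = E a" "y = E b" by blast
    then have "x + y = E (a + b)" by (simp add: bops_add[OF E_bops])
    then show "x + y \<in> S" using Dadd[OF ab(1,2)] by blast
  qed
  moreover have "\<forall>c. \<forall>x\<in>S. c *\<^sub>C x \<in> S"
  proof (intro allI ballI)
    fix c x assume "x \<in> S"
    then obtain a where a: "a \<in> D" "x = E a" by blast
    then have "c *\<^sub>C x = E (c *\<^sub>C a)" by (simp add: bops_scaleC[OF E_bops])
    then show "c *\<^sub>C x \<in> S" using DC[OF a(1)] by blast
  qed
  ultimately show ?thesis unfolding csubspace_def by blast
qed

lemma sepr_S: "sepr S"
  unfolding sepr_def
proof (intro ballI impI)
  fix a b assume a: "a \<in> S" and b: "b \<in> S" and h: "\<forall>\<xi>\<in>S. cinner \<xi> a = cinner \<xi> b"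
  show "a = b"
  proof (rule dense_eq)
    fix \<eta> assume eta: "\<eta> \<in> D"
    have "cinner (E \<eta>) a = cinner (E \<eta>) b" using h eta by blast
    then have "cinner \<eta> (E a) = cinner \<eta> (E b)" by (simp only: E_sa)
    moreover have "E a = a" "E b = b" using a b by auto
    ultimately have "cinner \<eta> a = cinner \<eta> b" by simp
    then show "cinner a \<eta> = cinner b \<eta>" using cinner_commute[of a \<eta>] cinner_commute[of b \<eta>] by simp
  qed
qed

lemma K_inner: "y \<in> range E \<Longrightarrow> cinner y \<eta> = cinner y (E \<eta>)"
proof -
  assume "y \<in> range E"
  then obtain z where z: "y = E z" by blast
  have "cinner (E z) (E \<eta>) = cinner z (E (E \<eta>))" by (rule E_sa)
  also have "\<dots> = cinner (E z) \<eta>" by (simp only: E_idem E_sa)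
  finally show ?thesis using z by simp
qed

lemma adj_Ecomm:
  assumes X: "X \<in> ldag D" and hE: "\<And>\<xi>. \<xi> \<in> D \<Longrightarrow> E (X \<xi>) = X (E \<xi>)" and xi: "\<xi> \<in> D"
  shows "E (adj D X \<xi>) = adj D X (E \<xi>)"
proof (rule dense_eq)
  fix \<eta> assume eta: "\<eta> \<in> D"
  have ED: "\<And>x. x \<in> D \<Longrightarrow> E x \<in> D" using S_D by auto
  have "cinner (E (adj D X \<xi>)) \<eta> = cinner (adj D X \<xi>) (E \<eta>)" by (rule E_sa)
  also have "\<dots> = cinner \<xi> (X (E \<eta>))" by (rule adj_eq'[OF sepr_D X xi ED[OF eta]])
  also have "\<dots> = cinner \<xi> (E (X \<eta>))" using hE[OF eta] by simp
  also have "\<dots> = cinner (E \<xi>) (X \<eta>)" by (rule E_sa[symmetric])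
  also have "\<dots> = cinner (adj D X (E \<xi>)) \<eta>" by (rule adj_eq'[OF sepr_D X ED[OF xi] eta, symmetric])
  finally show "cinner (E (adj D X \<xi>)) \<eta> = cinner (adj D X (E \<xi>)) \<eta>" .
qed

lemma rd_on_S: "a \<in> S \<Longrightarrow> rd D E X a = X a"
  by (auto simp: rd_def)

lemma rd_ldag:
  assumes X: "X \<in> ldag D" and hE: "\<And>\<xi>. \<xi> \<in> D \<Longrightarrow> E (X \<xi>) = X (E \<xi>)"
  shows "rd D E X \<in> ldag S" and "\<And>b. b \<in> S \<Longrightarrow> adj S (rd D E X) b = adj D X b"
proof -
  have XS: "X a \<in> S" if "a \<in> S" for a
  proof -
    from that obtain \<xi> where xi: "\<xi> \<in> D" "a = E \<xi>" by auto
    then have "X a = E (X \<xi>)" using hE[OF xi(1)] by simp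
    then show ?thesis using ldag_mem[OF X xi(1)] by blast
  qed
  have AS: "adj D X b \<in> S" if "b \<in> S" for b
  proof -
    from that obtain \<xi> where xi: "\<xi> \<in> D" "b = E \<xi>" by auto
    then have "adj D X b = E (adj D X \<xi>)" using adj_Ecomm[OF X hE] by simp
    then show ?thesis using adj_mem[OF sepr_D X xi(1)] by simp
  qed
  have c1: "clinear_on S (rd D E X)"
    unfolding clinear_on_def
  proof (intro conjI ballI allI)
    fix x y assume xy: "x \<in> S" "y \<in> S"
    have "x + y \<in> S" using S_sub xy unfolding csubspace_def by blast
    then show "rd D E X (x + y) = rd D E X x + rd D E X y"
      using xy by (simp add: rd_on_S ldag_add[OF X] S_D)
  next
    fix a x assume x: "x \<in> S"
    have "a *\<^sub>C x \<in> S" using S_sub x unfolding csubspace_def by blast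
    then show "rd D E X (a *\<^sub>C x) = a *\<^sub>C rd D E X x"
      using x by (simp add: rd_on_S ldag_scaleC[OF X] S_D)
  qed
  have c2: "rd D E X ` S \<subseteq> S"
  proof
    fix y assume "y \<in> rd D E X ` S"
    then obtain a where a: "a \<in> S" "y = rd D E X a" by blast
    then show "y \<in> S" using XS[OF a(1)] rd_on_S[OF a(1)] by simp
  qed
  have c3: "\<forall>b\<in>S. \<forall>a\<in>S. cinner (rd D E X a) b = cinner a (adj D X b)"
  proof (intro ballI)
    fix b a assume b: "b \<in> S" and a: "a \<in> S"
    have "cinner (X a) b = cinner a (adj D X b)" by (rule adj_eq[OF sepr_D X S_D[OF b] S_D[OF a]])
    then show "cinner (rd D E X a) b = cinner a (adj D X b)" using a by (simp only: rd_on_S)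
  qed
  have c4: "\<forall>x. x \<notin> S \<longrightarrow> rd D E X x = 0" by (simp add: rd_def)
  have c3': "\<forall>\<eta>\<in>S. \<exists>\<zeta>\<in>S. \<forall>\<xi>\<in>S. cinner (rd D E X \<xi>) \<eta> = cinner \<xi> \<zeta>"
  proof (intro ballI)
    fix \<eta> assume eta: "\<eta> \<in> S"
    show "\<exists>\<zeta>\<in>S. \<forall>\<xi>\<in>S. cinner (rd D E X \<xi>) \<eta> = cinner \<xi> \<zeta>"
      by (rule bexI[of _ "adj D X \<eta>"]) (use c3 eta AS[OF eta] in blast)+
  qed
  show RX: "rd D E X \<in> ldag S"
    unfolding ldag_def by (intro CollectI conjI c1 c2 c3' c4)
  fix b assume b: "b \<in> S"
  show "adj S (rd D E X) b = adj D X b"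
  proof (rule adj_unique[OF sepr_S RX b AS[OF b]])
    show "\<forall>\<xi>\<in>S. cinner (rd D E X \<xi>) b = cinner \<xi> (adj D X b)" using c3 b by blast
  qed
qed

lemma M_Ecomm: "X \<in> M \<Longrightarrow> \<xi> \<in> D \<Longrightarrow> E (X \<xi>) = X (E \<xi>)"
  by (rule Mc_commute[OF E_Mc])

lemma CE_bops:
  assumes C: "C \<in> bops (range E)" shows "C \<circ> E \<in> bops UNIV"
proof -
  obtain c where c: "\<forall>x\<in>range E. norm (C x) \<le> c * norm x" using C by (auto simp: bops_def)
  obtain e where e: "e \<ge> 0" "\<forall>x. norm (E x) \<le> e * norm x" using bops_bound[OF E_bops] by auto
  have lin: "clinear_on (range E) C" using C by (simp add: bops_def)
  have "norm (C (E x)) \<le> (max c 0 * e) * norm x" for x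
  proof -
    have "norm (C (E x)) \<le> c * norm (E x)" using c by blast
    also have "\<dots> \<le> max c 0 * norm (E x)" by (intro mult_right_mono) auto
    also have "\<dots> \<le> max c 0 * (e * norm x)" using e by (intro mult_left_mono) auto
    finally show ?thesis by (simp add: mult.assoc)
  qed
  moreover have "C (E (x + y)) = C (E x) + C (E y)" for x y
    using lin by (simp add: clinear_on_def bops_add[OF E_bops])
  moreover have "C (E (a *\<^sub>C x)) = a *\<^sub>C C (E x)" for a x
    using lin by (simp add: clinear_on_def bops_scaleC[OF E_bops])
  ultimately show ?thesis by (auto simp: bops_def clinear_on_def)
qed

lemma bopsK_range: "C \<in> bops (range E) \<Longrightarrow> C x \<in> range E"
proof (cases "x \<in> range E")
  case True
  assume "C \<in> bops (range E)" then show ?thesis using True by (auto simp: bops_def)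
next
  case False
  assume "C \<in> bops (range E)" then have "C x = 0" using False by (auto simp: bops_def)
  moreover have "E 0 = 0" by (rule bops_zero[OF E_bops])
  ultimately show ?thesis by (metis rangeI)
qed

end


context setting
begin

abbreviation "Mr \<equiv> reduced_alg D E M"
abbreviation "B \<equiv> wbicomm (range E) S Mr"

lemma Mr_rd: "W \<in> M \<Longrightarrow> rd D E W \<in> Mr"
  by (simp add: reduced_alg_rd)

lemma rdM_ldag: "W \<in> M \<Longrightarrow> rd D E W \<in> ldag S"
  by (rule rd_ldag(1)[OF M_ldag M_Ecomm])

lemma rdM_adj: "W \<in> M \<Longrightarrow> b \<in> S \<Longrightarrow> adj S (rd D E W) b = adj D W b"
  by (rule rd_ldag(2)[OF M_ldag M_Ecomm])

lemma wcommK_bops: "C \<in> wcomm (range E) S Mr \<Longrightarrow> C \<in> bops (range E)"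
  by (simp add: wcomm_def)

lemma wcommK_comm: "C \<in> wcomm (range E) S Mr \<Longrightarrow> Y \<in> Mr \<Longrightarrow> a \<in> S \<Longrightarrow> b \<in> S \<Longrightarrow>
   cinner (C (Y a)) b = cinner (C a) (adj S Y b)"
  unfolding wcomm_def by blast

lemma CE_Mc: assumes C: "C \<in> wcomm (range E) S Mr" shows "C \<circ> E \<in> Mc"
proof -
  have CB: "C \<in> bops (range E)" by (rule wcommK_bops[OF C])
  have "cinner (C (E (W \<xi>))) \<eta> = cinner (C (E \<xi>)) (adj D W \<eta>)"
    if W: "W \<in> M" and xi: "\<xi> \<in> D" and eta: "\<eta> \<in> D" for W \<xi> \<eta>
  proof -
    have "E (W \<xi>) = rd D E W (E \<xi>)" using M_Ecomm[OF W xi] rd_on_S[OF ES[OF xi]] by simp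
    then have "cinner (C (E (W \<xi>))) \<eta> = cinner (C (rd D E W (E \<xi>))) (E \<eta>)"
      using K_inner[OF bopsK_range[OF CB]] by simp
    also have "\<dots> = cinner (C (E \<xi>)) (adj S (rd D E W) (E \<eta>))"
      by (rule wcommK_comm[OF C Mr_rd[OF W] ES[OF xi] ES[OF eta]])
    also have "adj S (rd D E W) (E \<eta>) = adj D W (E \<eta>)" by (rule rdM_adj[OF W ES[OF eta]])
    also have "\<dots> = E (adj D W \<eta>)" using adj_Ecomm[OF M_ldag[OF W] M_Ecomm[OF W] eta] by simp
    also have "cinner (C (E \<xi>)) (E (adj D W \<eta>)) = cinner (C (E \<xi>)) (adj D W \<eta>)"
      using K_inner[OF bopsK_range[OF CB]] by simp
    finally show ?thesis .
  qed
  then show ?thesis using CE_bops[OF CB] unfolding wcomm_def by auto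
qed

lemma wbicomm_ldag: "X \<in> wbicomm K T N \<Longrightarrow> X \<in> ldag T"
  by (simp add: wbicomm_def)

lemma wbicomm_comm: "X \<in> wbicomm K T N \<Longrightarrow> C \<in> wcomm K T N \<Longrightarrow> \<xi> \<in> T \<Longrightarrow> \<eta> \<in> T \<Longrightarrow>
   cinner (C (X \<xi>)) \<eta> = cinner (C \<xi>) (adj T X \<eta>)"
  unfolding wbicomm_def by blast

lemma wbicomm_Ecomm: "X \<in> wbicomm UNIV D M \<Longrightarrow> \<xi> \<in> D \<Longrightarrow> E (X \<xi>) = X (E \<xi>)"
  by (rule comm_gen[OF wbicomm_ldag E_bops]) (auto intro: Mc_D[OF E_Mc] wbicomm_comm[OF _ E_Mc])

lemma incl1: assumes X: "X \<in> wbicomm UNIV D M" shows "rd D E X \<in> B"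
proof -
  have XL: "X \<in> ldag D" using X by (rule wbicomm_ldag)
  have hE: "\<And>\<xi>. \<xi> \<in> D \<Longrightarrow> E (X \<xi>) = X (E \<xi>)" by (rule wbicomm_Ecomm[OF X])
  have R: "rd D E X \<in> ldag S" by (rule rd_ldag(1)[OF XL hE])
  have "cinner (C (rd D E X a)) b = cinner (C a) (adj S (rd D E X) b)"
    if C: "C \<in> wcomm (range E) S Mr" and a: "a \<in> S" and b: "b \<in> S" for C a b
  proof -
    have Ea: "E a = a" using a by auto
    have "rd D E X a = X a" by (rule rd_on_S[OF a])
    also have "X a = E (X a)" using hE[OF S_D[OF a]] Ea by simp
    finally have "C (rd D E X a) = (C \<circ> E) (X a)" by simp
    then have "cinner (C (rd D E X a)) b = cinner ((C \<circ> E) a) (adj D X b)"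
      using wbicomm_comm[OF X CE_Mc[OF C] S_D[OF a] S_D[OF b]] by simp
    also have "(C \<circ> E) a = C a" using Ea by simp
    also have "adj D X b = adj S (rd D E X) b" using rd_ldag(2)[OF XL hE b] by simp
    finally show ?thesis .
  qed
  then show ?thesis unfolding wbicomm_def using R by blast
qed

end


lemma ldag_zero: "X \<in> ldag S \<Longrightarrow> 0 \<in> S \<Longrightarrow> X 0 = 0"
  using ldag_scaleC[of X S 0 0] by simp

lemma bopsK_add: "C \<in> bops K \<Longrightarrow> x \<in> K \<Longrightarrow> y \<in> K \<Longrightarrow> C (x + y) = C x + C y"
  unfolding bops_def clinear_on_def by blast

context setting
begin

abbreviation "Cr \<equiv> wcomm (range E) S Mr"

lemma S_K: "x \<in> S \<Longrightarrow> x \<in> range E" by auto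

lemma K_inner_left: "b \<in> range E \<Longrightarrow> cinner z b = cinner (E z) b"
proof -
  assume "b \<in> range E"
  then obtain y where y: "b = E y" by blast
  have "cinner (E z) (E y) = cinner z (E (E y))" by (rule E_sa)
  then show ?thesis using y by simp
qed

lemma Mr_E: "W \<in> Mr \<Longrightarrow> \<exists>W0\<in>M. W = rd D E W0"
  by (auto simp: reduced_alg_rd)

lemma S0: "0 \<in> S" using S_sub by (simp add: csubspace_def)

lemma adjD_S: "W0 \<in> M \<Longrightarrow> b \<in> S \<Longrightarrow> adj D W0 b \<in> S"
proof -
  assume W: "W0 \<in> M" and "b \<in> S"
  then obtain \<eta> where eta: "\<eta> \<in> D" "b = E \<eta>" by auto
  then have "adj D W0 b = E (adj D W0 \<eta>)" using adj_Ecomm[OF M_ldag[OF W] M_Ecomm[OF W] eta(1)] by simp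
  then show ?thesis using adj_mem[OF sepr_D M_ldag[OF W] eta(1)] by simp
qed

lemma MS: "W0 \<in> M \<Longrightarrow> a \<in> S \<Longrightarrow> W0 a \<in> S"
proof -
  assume W: "W0 \<in> M" and a: "a \<in> S"
  have "rd D E W0 a \<in> S" by (rule ldag_mem[OF rdM_ldag[OF W] a])
  then show ?thesis using rd_on_S[OF a] by simp
qed

lemma rangeE_add: "x \<in> range E \<Longrightarrow> y \<in> range E \<Longrightarrow> x + y \<in> range E"
proof -
  assume "x \<in> range E" "y \<in> range E"
  then obtain u v where "x = E u" "y = E v" by blast
  then have "x + y = E (u + v)" by (simp add: bops_add[OF E_bops])
  then show ?thesis by blast
qed

lemma rangeE_scaleC: "x \<in> range E \<Longrightarrow> a *\<^sub>C x \<in> range E"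
proof -
  assume "x \<in> range E"
  then obtain u where "x = E u" by blast
  then have "a *\<^sub>C x = E (a *\<^sub>C u)" by (simp add: bops_scaleC[OF E_bops])
  then show ?thesis by blast
qed

definition Cst :: "('h \<Rightarrow> 'h) \<Rightarrow> 'h \<Rightarrow> 'h" where
  "Cst C = (\<lambda>x. if x \<in> range E then cadj (C \<circ> E) x else 0)"

lemma Cst_bops: assumes C: "C \<in> bops (range E)" shows "Cst C \<in> bops (range E)"
proof -
  have CE: "C \<circ> E \<in> bops UNIV" by (rule CE_bops[OF C])
  have AB: "cadj (C \<circ> E) \<in> bops UNIV" by (rule cadj_bops[OF CE])
  have inK: "cadj (C \<circ> E) x = E (cadj (C \<circ> E) x)" for x
  proof (rule cinner_ext_right)
    fix y
    have "cinner y (E (cadj (C \<circ> E) x)) = cinner (E y) (cadj (C \<circ> E) x)" by (rule E_sa[symmetric])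
    also have "\<dots> = cinner ((C \<circ> E) (E y)) x" by (rule cadj[OF CE, symmetric])
    also have "\<dots> = cinner ((C \<circ> E) y) x" by simp
    also have "\<dots> = cinner y (cadj (C \<circ> E) x)" by (rule cadj[OF CE])
    finally show "cinner y (cadj (C \<circ> E) x) = cinner y (E (cadj (C \<circ> E) x))" by simp
  qed
  obtain c where c: "\<forall>x. norm (cadj (C \<circ> E) x) \<le> c * norm x" using AB by (auto simp: bops_def)
  have l1: "clinear_on (range E) (Cst C)"
    unfolding clinear_on_def Cst_def
  proof (intro conjI ballI allI)
    fix x y assume "x \<in> range E" "y \<in> range E"
    moreover then have "x + y \<in> range E" by (rule rangeE_add)
    ultimately show "(if x + y \<in> range E then cadj (C \<circ> E) (x + y) else 0) =
        (if x \<in> range E then cadj (C \<circ> E) x else 0) + (if y \<in> range E then cadj (C \<circ> E) y else 0)"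
      by (simp add: bops_add[OF AB])
  next
    fix a x assume "x \<in> range E"
    moreover then have "a *\<^sub>C x \<in> range E" by (rule rangeE_scaleC)
    ultimately show "(if a *\<^sub>C x \<in> range E then cadj (C \<circ> E) (a *\<^sub>C x) else 0) =
        a *\<^sub>C (if x \<in> range E then cadj (C \<circ> E) x else 0)"
      by (simp add: bops_scaleC[OF AB])
  qed
  have l2: "Cst C ` range E \<subseteq> range E"
  proof
    fix y assume "y \<in> Cst C ` range E"
    then obtain x where "x \<in> range E" "y = Cst C x" by blast
    then have "y = E (cadj (C \<circ> E) x)" using inK by (simp add: Cst_def)
    then show "y \<in> range E" by blast
  qed
  have l3: "\<exists>c. \<forall>x\<in>range E. norm (Cst C x) \<le> c * norm x"
    using c by (intro exI[of _ c]) (simp add: Cst_def)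
  have l4: "\<forall>x. x \<notin> range E \<longrightarrow> Cst C x = 0" by (simp add: Cst_def)
  show ?thesis unfolding bops_def by (intro CollectI conjI l1 l2 l3 l4)
qed

lemma Cst_rel: assumes C: "C \<in> bops (range E)" and x: "x \<in> range E" and b: "b \<in> range E"
  shows "cinner (Cst C x) b = cinner x (C b)"
proof -
  have CE: "C \<circ> E \<in> bops UNIV" by (rule CE_bops[OF C])
  have "cinner (Cst C x) b = cinner (cadj (C \<circ> E) x) b" using x by (simp add: Cst_def)
  also have "\<dots> = cinner x ((C \<circ> E) b)" by (rule cadj_left[OF CE])
  also have "(C \<circ> E) b = C b" using b by auto
  finally show ?thesis .
qed

lemma Cst_Cr: assumes C: "C \<in> Cr" shows "Cst C \<in> Cr"
proof -
  have CB: "C \<in> bops (range E)" by (rule wcommK_bops[OF C])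
  have "cinner (Cst C (W a)) b = cinner (Cst C a) (adj S W b)"
    if W: "W \<in> Mr" and a: "a \<in> S" and b: "b \<in> S" for W a b
  proof -
    obtain W0 where W0: "W0 \<in> M" "W = rd D E W0" using Mr_E[OF W] by blast
    define W' where "W' = rd D E (adj D W0)"
    have W'M: "W' \<in> Mr" unfolding W'_def by (rule Mr_rd[OF M_adj[OF W0(1)]])
    have Wa: "W a = W0 a" using W0 rd_on_S[OF a] by simp
    have WaS: "W0 a \<in> S" by (rule MS[OF W0(1) a])
    have adjW': "adj S W' a = W0 a"
    proof -
      have "adj S W' a = adj D (adj D W0) a" unfolding W'_def by (rule rdM_adj[OF M_adj[OF W0(1)] a])
      also have "\<dots> = W0 a" by (rule adj_ldag(2)[OF sepr_D D_sub M_ldag[OF W0(1)] S_D[OF a]])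
      finally show ?thesis .
    qed
    have W'b: "W' b = adj D W0 b" unfolding W'_def by (rule rd_on_S[OF b])
    have W'bS: "W' b \<in> S" using W'b adjD_S[OF W0(1) b] by simp
    have adjW: "adj S W b = adj D W0 b" using W0 rdM_adj[OF W0(1) b] by simp
    have "cinner (Cst C (W a)) b = cinner (W0 a) (C b)"
      using Wa Cst_rel[OF CB S_K[OF WaS] S_K[OF b]] by simp
    also have "\<dots> = cnj (cinner (C b) (W0 a))" by (rule cinner_commute)
    also have "cinner (C b) (W0 a) = cinner (C (W' b)) a"
      using wcommK_comm[OF C W'M b a] adjW' by simp
    also have "cnj (cinner (C (W' b)) a) = cinner a (C (W' b))" by (simp flip: cinner_commute)
    also have "\<dots> = cinner (Cst C a) (W' b)" by (rule Cst_rel[OF CB S_K[OF a] S_K[OF W'bS], symmetric])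
    also have "W' b = adj S W b" using W'b adjW by simp
    finally show ?thesis .
  qed
  then show ?thesis using Cst_bops[OF CB] unfolding wcomm_def by blast
qed

lemma B_ldag: "Y \<in> B \<Longrightarrow> Y \<in> ldag S" by (rule wbicomm_ldag)
lemma B_comm: "Y \<in> B \<Longrightarrow> C \<in> Cr \<Longrightarrow> a \<in> S \<Longrightarrow> b \<in> S \<Longrightarrow>
   cinner (C (Y a)) b = cinner (C a) (adj S Y b)"
  by (rule wbicomm_comm)

lemma B_adj: assumes Y: "Y \<in> B" shows "adj S Y \<in> B"
proof -
  have YL: "Y \<in> ldag S" by (rule B_ldag[OF Y])
  have AL: "adj S Y \<in> ldag S" by (rule adj_ldag(1)[OF sepr_S S_sub YL])
  have "cinner (C (adj S Y a)) b = cinner (C a) (adj S (adj S Y) b)"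
    if C: "C \<in> Cr" and a: "a \<in> S" and b: "b \<in> S" for C a b
  proof -
    have CB: "C \<in> bops (range E)" by (rule wcommK_bops[OF C])
    have YbS: "Y b \<in> S" by (rule ldag_mem[OF YL b])
    have YaS: "adj S Y a \<in> S" by (rule adj_mem[OF sepr_S YL a])
    have "cinner (Cst C (Y b)) a = cinner (Cst C b) (adj S Y a)"
      by (rule B_comm[OF Y Cst_Cr[OF C] b a])
    then have "cinner (Y b) (C a) = cinner b (C (adj S Y a))"
      using Cst_rel[OF CB S_K[OF YbS] S_K[OF a]] Cst_rel[OF CB S_K[OF b] S_K[OF YaS]] by simp
    then have "cnj (cinner (Y b) (C a)) = cnj (cinner b (C (adj S Y a)))" by simp
    then have "cinner (C (adj S Y a)) b = cinner (C a) (Y b)" by (simp flip: cinner_commute)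
    then show ?thesis using adj_ldag(2)[OF sepr_S S_sub YL b] by simp
  qed
  then show ?thesis using AL unfolding wbicomm_def by blast
qed

lemma B_comp: assumes Y1: "Y1 \<in> B" and Y2: "Y2 \<in> B" shows "Y1 \<circ> Y2 \<in> B"
proof -
  have L1: "Y1 \<in> ldag S" and L2: "Y2 \<in> ldag S" using Y1 Y2 by (simp_all add: B_ldag)
  have c1: "clinear_on S (Y1 \<circ> Y2)"
    unfolding clinear_on_def
    using L1 L2 by (simp add: ldag_add ldag_scaleC ldag_mem)
  have c2: "(Y1 \<circ> Y2) ` S \<subseteq> S" using L1 L2 by (auto simp: ldag_mem)
  have adjc: "\<forall>\<xi>\<in>S. cinner ((Y1 \<circ> Y2) \<xi>) \<eta> = cinner \<xi> (adj S Y2 (adj S Y1 \<eta>))" if eta: "\<eta> \<in> S" for \<eta>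
    using eta by (simp add: adj_eq[OF sepr_S L1] adj_eq[OF sepr_S L2] adj_mem[OF sepr_S L1] ldag_mem[OF L2])
  have c3: "\<forall>\<eta>\<in>S. \<exists>\<zeta>\<in>S. \<forall>\<xi>\<in>S. cinner ((Y1 \<circ> Y2) \<xi>) \<eta> = cinner \<xi> \<zeta>"
  proof (intro ballI)
    fix \<eta> assume eta: "\<eta> \<in> S"
    show "\<exists>\<zeta>\<in>S. \<forall>\<xi>\<in>S. cinner ((Y1 \<circ> Y2) \<xi>) \<eta> = cinner \<xi> \<zeta>"
      by (rule bexI[of _ "adj S Y2 (adj S Y1 \<eta>)"]) (use adjc[OF eta] eta adj_mem[OF sepr_S L1] adj_mem[OF sepr_S L2] in blast)+
  qed
  have c4: "\<forall>x. x \<notin> S \<longrightarrow> (Y1 \<circ> Y2) x = 0"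
    by (simp add: ldag_out[OF L1] ldag_out[OF L2] ldag_zero[OF L1 S0])
  have CL: "Y1 \<circ> Y2 \<in> ldag S" unfolding ldag_def by (intro CollectI conjI c1 c2 c3 c4)
  have adjeq: "adj S (Y1 \<circ> Y2) \<eta> = adj S Y2 (adj S Y1 \<eta>)" if eta: "\<eta> \<in> S" for \<eta>
    by (rule adj_unique[OF sepr_S CL eta]) (use adjc[OF eta] eta adj_mem[OF sepr_S L1] adj_mem[OF sepr_S L2] in blast)+
  have "cinner (C ((Y1 \<circ> Y2) a)) b = cinner (C a) (adj S (Y1 \<circ> Y2) b)"
    if C: "C \<in> Cr" and a: "a \<in> S" and b: "b \<in> S" for C a b
  proof -
    have "cinner (C ((Y1 \<circ> Y2) a)) b = cinner (C (Y2 a)) (adj S Y1 b)"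
      using B_comm[OF Y1 C ldag_mem[OF L2 a] b] by simp
    also have "\<dots> = cinner (C a) (adj S Y2 (adj S Y1 b))"
      by (rule B_comm[OF Y2 C a adj_mem[OF sepr_S L1 b]])
    finally show ?thesis using adjeq[OF b] by simp
  qed
  then show ?thesis using CL unfolding wbicomm_def by blast
qed

lemma B_add: assumes Y1: "Y1 \<in> B" and Y2: "Y2 \<in> B" shows "(\<lambda>x. Y1 x + Y2 x) \<in> B"
proof -
  have L1: "Y1 \<in> ldag S" and L2: "Y2 \<in> ldag S" using Y1 Y2 by (simp_all add: B_ldag)
  let ?Y = "\<lambda>x. Y1 x + Y2 x"
  have Sadd: "\<And>a b. a \<in> S \<Longrightarrow> b \<in> S \<Longrightarrow> a + b \<in> S" using S_sub unfolding csubspace_def by blast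
  have c1: "clinear_on S ?Y"
    unfolding clinear_on_def
    using L1 L2 by (simp add: ldag_add ldag_scaleC scaleC_add_right)
  have c2: "?Y ` S \<subseteq> S" using L1 L2 Sadd by (auto simp: ldag_mem)
  have adjc: "\<forall>\<xi>\<in>S. cinner (?Y \<xi>) \<eta> = cinner \<xi> (adj S Y1 \<eta> + adj S Y2 \<eta>)" if eta: "\<eta> \<in> S" for \<eta>
    using eta by (simp add: adj_eq[OF sepr_S L1] adj_eq[OF sepr_S L2] cinner_add_left cinner_add_right)
  have AS: "\<And>\<eta>. \<eta> \<in> S \<Longrightarrow> adj S Y1 \<eta> + adj S Y2 \<eta> \<in> S"
    using Sadd adj_mem[OF sepr_S L1] adj_mem[OF sepr_S L2] by blast
  have c3: "\<forall>\<eta>\<in>S. \<exists>\<zeta>\<in>S. \<forall>\<xi>\<in>S. cinner (?Y \<xi>) \<eta> = cinner \<xi> \<zeta>"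
  proof (intro ballI)
    fix \<eta> assume eta: "\<eta> \<in> S"
    show "\<exists>\<zeta>\<in>S. \<forall>\<xi>\<in>S. cinner (?Y \<xi>) \<eta> = cinner \<xi> \<zeta>"
      by (rule bexI[of _ "adj S Y1 \<eta> + adj S Y2 \<eta>"]) (use adjc[OF eta] AS[OF eta] in blast)+
  qed
  have c4: "\<forall>x. x \<notin> S \<longrightarrow> ?Y x = 0"
    by (simp add: ldag_out[OF L1] ldag_out[OF L2])
  have CL: "?Y \<in> ldag S" unfolding ldag_def by (intro CollectI conjI c1 c2 c3 c4)
  have adjeq: "adj S ?Y \<eta> = adj S Y1 \<eta> + adj S Y2 \<eta>" if eta: "\<eta> \<in> S" for \<eta>
    by (rule adj_unique[OF sepr_S CL eta AS[OF eta]]) (use adjc[OF eta] in blast)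
  have "cinner (C (?Y a)) b = cinner (C a) (adj S ?Y b)"
    if C: "C \<in> Cr" and a: "a \<in> S" and b: "b \<in> S" for C a b
  proof -
    have CB: "C \<in> bops (range E)" by (rule wcommK_bops[OF C])
    have "C (?Y a) = C (Y1 a) + C (Y2 a)"
      by (rule bopsK_add[OF CB S_K[OF ldag_mem[OF L1 a]] S_K[OF ldag_mem[OF L2 a]]])
    then have "cinner (C (?Y a)) b = cinner (C (Y1 a)) b + cinner (C (Y2 a)) b"
      by (simp add: cinner_add_left)
    also have "\<dots> = cinner (C a) (adj S Y1 b) + cinner (C a) (adj S Y2 b)"
      using B_comm[OF Y1 C a b] B_comm[OF Y2 C a b] by simp
    finally show ?thesis using adjeq[OF b] by (simp add: cinner_add_right)
  qed
  then show ?thesis using CL unfolding wbicomm_def by blast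
qed

end


record 'h rep = rn :: nat  rC :: "nat \<Rightarrow> 'h \<Rightarrow> 'h"  rx :: "nat \<Rightarrow> 'h"  re :: 'h

context setting
begin

definition valid :: "'h rep \<Rightarrow> bool" where
  "valid r \<longleftrightarrow> (\<forall>k<rn r. rC r k \<in> Mc \<and> rx r k \<in> D) \<and> re r \<in> D"

definition zeta :: "'h rep \<Rightarrow> 'h" where
  "zeta r = (\<Sum>k<rn r. rC r k (E (rx r k))) + (re r - Z (re r))"

definition val :: "('h \<Rightarrow> 'h) \<Rightarrow> 'h rep \<Rightarrow> 'h" where
  "val Y r = (\<Sum>k<rn r. rC r k (Y (E (rx r k))))"

lemma ext_graph_iff:
  "(a, b) \<in> ext_graph D Mc E Z Y \<longleftrightarrow> (\<exists>r. valid r \<and> a = zeta r \<and> b = val Y r)"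
proof
  assume "(a, b) \<in> ext_graph D Mc E Z Y"
  then have "\<exists>(n::nat) (C::nat \<Rightarrow> 'h \<Rightarrow> 'h) \<xi> \<eta>. (\<forall>k<n. C k \<in> Mc \<and> \<xi> k \<in> D) \<and> \<eta> \<in> D
      \<and> a = (\<Sum>k<n. C k (E (\<xi> k))) + (\<eta> - Z \<eta>) \<and> b = (\<Sum>k<n. C k (Y (E (\<xi> k))))"
    unfolding ext_graph_def by simp
  then obtain n :: nat and C :: "nat \<Rightarrow> 'h \<Rightarrow> 'h" and \<xi> \<eta> where h: "(\<forall>k<n. C k \<in> Mc \<and> \<xi> k \<in> D)" "\<eta> \<in> D"
      "a = (\<Sum>k<n. C k (E (\<xi> k))) + (\<eta> - Z \<eta>)" "b = (\<Sum>k<n. C k (Y (E (\<xi> k))))"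
    by blast
  let ?r = "\<lparr>rn = n, rC = C, rx = \<xi>, re = \<eta>\<rparr>"
  have "valid ?r \<and> a = zeta ?r \<and> b = val Y ?r" using h by (simp add: valid_def zeta_def val_def)
  then show "\<exists>r. valid r \<and> a = zeta r \<and> b = val Y r" by blast
next
  assume "\<exists>r. valid r \<and> a = zeta r \<and> b = val Y r"
  then obtain r where r: "valid r" "a = zeta r" "b = val Y r" by blast
  have "(\<forall>k<rn r. rC r k \<in> Mc \<and> rx r k \<in> D) \<and> re r \<in> D
      \<and> a = (\<Sum>k<rn r. rC r k (E (rx r k))) + (re r - Z (re r)) \<and> b = (\<Sum>k<rn r. rC r k (Y (E (rx r k))))"
    using r by (simp add: valid_def zeta_def val_def)
  then show "(a, b) \<in> ext_graph D Mc E Z Y"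
    unfolding ext_graph_def by (intro CollectI case_prodI exI)
qed

lemma RZ_iff: "z \<in> range Z \<longleftrightarrow> Z z = z"
proof
  assume "z \<in> range Z" then obtain y where "z = Z y" by blast
  then show "Z z = z" by simp
next
  assume "Z z = z" then show "z \<in> range Z" by (metis rangeI)
qed

lemma RZ_add: "a \<in> range Z \<Longrightarrow> b \<in> range Z \<Longrightarrow> a + b \<in> range Z"
  by (simp add: RZ_iff bops_add[OF Z_bops])

lemma RZ_diff: "a \<in> range Z \<Longrightarrow> b \<in> range Z \<Longrightarrow> a - b \<in> range Z"
  by (simp add: RZ_iff bops_diff[OF Z_bops])

lemma RZ_scaleC: "a \<in> range Z \<Longrightarrow> c *\<^sub>C a \<in> range Z"
  by (simp add: RZ_iff bops_scaleC[OF Z_bops])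

lemma RZ_zero: "0 \<in> range Z"
  by (simp add: RZ_iff bops_zero[OF Z_bops])

lemma RZ_sum: "(\<And>k. k < (n::nat) \<Longrightarrow> f k \<in> range Z) \<Longrightarrow> (\<Sum>k<n. f k) \<in> range Z"
  by (induction n) (auto simp: RZ_zero RZ_add)

lemma RZ_closed: "closed (range Z)"
  using Z_range by simp

lemma RZ_CE: assumes C: "C \<in> Mc" shows "C (E x) \<in> range Z"
proof -
  have "C (E x) \<in> (\<Union>C\<in>Mc. range (C \<circ> E))" using C by auto
  then have "C (E x) \<in> cspan (\<Union>C\<in>Mc. range (C \<circ> E))"
    unfolding cspan_def
    by (intro CollectI exI[of _ 1] exI[of _ "\<lambda>_. 1"] exI[of _ "\<lambda>_. C (E x)"]) (simp add: scaleC_one)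
  then have "C (E x) \<in> closure (cspan (\<Union>C\<in>Mc. range (C \<circ> E)))" by (rule closure_subset[THEN subsetD])
  then show ?thesis using Z_range by simp
qed

lemma orthZ: assumes z: "z \<in> range Z" shows "cinner (\<eta> - Z \<eta>) z = 0"
proof -
  have "cinner (\<eta> - Z \<eta>) z = cinner (\<eta> - Z \<eta>) (Z z)" using z by (simp add: RZ_iff)
  also have "\<dots> = cinner (Z (\<eta> - Z \<eta>)) z" by (rule Z_sa[symmetric])
  also have "Z (\<eta> - Z \<eta>) = 0" by (simp add: bops_diff[OF Z_bops])
  finally show ?thesis by simp
qed

lemma orthZ': "z \<in> range Z \<Longrightarrow> cinner z (\<eta> - Z \<eta>) = 0"
proof -
  assume z: "z \<in> range Z"
  have "cinner z (\<eta> - Z \<eta>) = cnj (cinner (\<eta> - Z \<eta>) z)" by (rule cinner_commute)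
  then show ?thesis using orthZ[OF z] by simp
qed

lemma SE_D: "a \<in> S \<Longrightarrow> \<exists>u\<in>D. a = E u"
  by blast

lemma val_RZ: assumes r: "valid r" and Y: "Y \<in> ldag S" shows "val Y r \<in> range Z"
  unfolding val_def
proof (rule RZ_sum)
  fix k assume k: "k < rn r"
  have C: "rC r k \<in> Mc" and x: "rx r k \<in> D" using r k by (auto simp: valid_def)
  have "Y (E (rx r k)) \<in> S" by (rule ldag_mem[OF Y ES[OF x]])
  then have "Y (E (rx r k)) = E (Y (E (rx r k)))" by (rule S_E[symmetric])
  then show "rC r k (Y (E (rx r k))) \<in> range Z" using RZ_CE[OF C, of "Y (E (rx r k))"] by simp
qed

lemma cadj_val_RZ: assumes C: "C \<in> Mc" and r: "valid r" and Y: "Y \<in> ldag S"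
  shows "cadj C (val Y r) \<in> range Z"
proof -
  have CB: "cadj C \<in> bops UNIV" by (rule cadj_bops[OF Mc_bops[OF C]])
  have "cadj C (val Y r) = (\<Sum>k<rn r. cadj C (rC r k (Y (E (rx r k)))))"
    unfolding val_def by (rule bops_sum[OF CB])
  also have "\<dots> \<in> range Z"
  proof (rule RZ_sum)
    fix k assume k: "k < rn r"
    have C': "rC r k \<in> Mc" and x: "rx r k \<in> D" using r k by (auto simp: valid_def)
    have "Y (E (rx r k)) \<in> S" by (rule ldag_mem[OF Y ES[OF x]])
    then have "Y (E (rx r k)) = E (Y (E (rx r k)))" by (rule S_E[symmetric])
    then show "cadj C (rC r k (Y (E (rx r k)))) \<in> range Z"
      using RZ_CE[OF Mc_comp[OF Mc_cadj[OF C] C'], of "Y (E (rx r k))"] by simp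
  qed
  finally show ?thesis .
qed

subsection \<open>The key commutation identity\<close>

definition TT :: "('h \<Rightarrow> 'h) \<Rightarrow> ('h \<Rightarrow> 'h) \<Rightarrow> 'h \<Rightarrow> 'h" where
  "TT C C' = (\<lambda>x. if x \<in> range E then E (cadj C' (C x)) else 0)"

lemma TT_Cr: assumes C: "C \<in> Mc" and C': "C' \<in> Mc" shows "TT C C' \<in> Cr"
proof -
  have CB: "C \<in> bops UNIV" and C'B: "C' \<in> bops UNIV" using C C' by (simp_all add: Mc_bops)
  have AB: "cadj C' \<in> bops UNIV" by (rule cadj_bops[OF C'B])
  have F: "E \<circ> cadj C' \<circ> C \<in> bops UNIV" by (intro bops_comp E_bops AB CB)
  obtain c where c: "\<forall>x. norm ((E \<circ> cadj C' \<circ> C) x) \<le> c * norm x" using F by (auto simp: bops_def)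
  have l1: "clinear_on (range E) (TT C C')"
    unfolding clinear_on_def TT_def
  proof (intro conjI ballI allI)
    fix x y assume "x \<in> range E" "y \<in> range E"
    moreover then have "x + y \<in> range E" by (rule rangeE_add)
    ultimately show "(if x + y \<in> range E then E (cadj C' (C (x + y))) else 0) =
        (if x \<in> range E then E (cadj C' (C x)) else 0) + (if y \<in> range E then E (cadj C' (C y)) else 0)"
      by (simp add: bops_add[OF CB] bops_add[OF AB] bops_add[OF E_bops])
  next
    fix a x assume "x \<in> range E"
    moreover then have "a *\<^sub>C x \<in> range E" by (rule rangeE_scaleC)
    ultimately show "(if a *\<^sub>C x \<in> range E then E (cadj C' (C (a *\<^sub>C x))) else 0) =
        a *\<^sub>C (if x \<in> range E then E (cadj C' (C x)) else 0)"
      by (simp add: bops_scaleC[OF CB] bops_scaleC[OF AB] bops_scaleC[OF E_bops])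
  qed
  have l2: "TT C C' ` range E \<subseteq> range E" by (auto simp: TT_def)
  have l3: "\<exists>c. \<forall>x\<in>range E. norm (TT C C' x) \<le> c * norm x"
    using c by (intro exI[of _ c]) (simp add: TT_def)
  have l4: "\<forall>x. x \<notin> range E \<longrightarrow> TT C C' x = 0" by (simp add: TT_def)
  have TB: "TT C C' \<in> bops (range E)" unfolding bops_def by (intro CollectI conjI l1 l2 l3 l4)
  have TTrel: "cinner (TT C C' x) b = cinner (C x) (C' b)" if "x \<in> range E" "b \<in> range E" for x b
  proof -
    have "cinner (TT C C' x) b = cinner (E (cadj C' (C x))) b" using that by (simp add: TT_def)
    also have "\<dots> = cinner (cadj C' (C x)) b" using K_inner_left[OF that(2)] by simp
    also have "\<dots> = cinner (C x) (C' b)" by (rule cadj_left[OF C'B])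
    finally show ?thesis .
  qed
  have "cinner (TT C C' (W a)) b = cinner (TT C C' a) (adj S W b)"
    if W: "W \<in> Mr" and a: "a \<in> S" and b: "b \<in> S" for W a b
  proof -
    obtain W0 where W0: "W0 \<in> M" "W = rd D E W0" using Mr_E[OF W] by blast
    have Wa: "W a = W0 a" using W0 rd_on_S[OF a] by simp
    have adjW: "adj S W b = adj D W0 b" using W0 rdM_adj[OF W0(1) b] by simp
    have AbS: "adj D W0 b \<in> S" by (rule adjD_S[OF W0(1) b])
    have "cinner (TT C C' (W a)) b = cinner (C (W0 a)) (C' b)"
      using TTrel[OF S_K[OF MS[OF W0(1) a]] S_K[OF b]] Wa by simp
    also have "\<dots> = cinner (C a) (adj D W0 (C' b))"
      by (rule Mc_comm[OF C W0(1) S_D[OF a] Mc_D[OF C' S_D[OF b]]])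
    also have "adj D W0 (C' b) = C' (adj D W0 b)"
      using Mc_commute[OF C' M_adj[OF W0(1)] S_D[OF b]] by simp
    also have "cinner (C a) (C' (adj D W0 b)) = cinner (TT C C' a) (adj D W0 b)"
      using TTrel[OF S_K[OF a] S_K[OF AbS]] by simp
    finally show ?thesis using adjW by simp
  qed
  then show ?thesis using TB unfolding wcomm_def by blast
qed

lemma L0: assumes Y: "Y \<in> B" and C: "C \<in> Mc" and C': "C' \<in> Mc" and a: "a \<in> S" and b: "b \<in> S"
  shows "cinner (C (Y a)) (C' b) = cinner (C a) (C' (adj S Y b))"
proof -
  have YL: "Y \<in> ldag S" by (rule B_ldag[OF Y])
  have C'B: "C' \<in> bops UNIV" by (rule Mc_bops[OF C'])
  have rel: "cinner (TT C C' x) y = cinner (C x) (C' y)" if "x \<in> range E" "y \<in> range E" for x y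
  proof -
    have "cinner (TT C C' x) y = cinner (E (cadj C' (C x))) y" using that by (simp add: TT_def)
    also have "\<dots> = cinner (cadj C' (C x)) y" using K_inner_left[OF that(2)] by simp
    also have "\<dots> = cinner (C x) (C' y)" by (rule cadj_left[OF C'B])
    finally show ?thesis .
  qed
  have "cinner (C (Y a)) (C' b) = cinner (TT C C' (Y a)) b"
    using rel[OF S_K[OF ldag_mem[OF YL a]] S_K[OF b]] by simp
  also have "\<dots> = cinner (TT C C' a) (adj S Y b)" by (rule B_comm[OF Y TT_Cr[OF C C'] a b])
  also have "\<dots> = cinner (C a) (C' (adj S Y b))"
    by (rule rel[OF S_K[OF a] S_K[OF adj_mem[OF sepr_S YL b]]])
  finally show ?thesis .
qed

end


context setting
begin

lemma valid_C: "valid r \<Longrightarrow> k < rn r \<Longrightarrow> rC r k \<in> Mc" by (simp add: valid_def)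
lemma valid_x: "valid r \<Longrightarrow> k < rn r \<Longrightarrow> rx r k \<in> D" by (simp add: valid_def)
lemma valid_e: "valid r \<Longrightarrow> re r \<in> D" by (simp add: valid_def)

lemma YS_E: "Y \<in> ldag S \<Longrightarrow> \<xi> \<in> D \<Longrightarrow> E (Y (E \<xi>)) = Y (E \<xi>)"
  using ldag_mem[OF _ ES] S_E by blast

lemma CY_RZ: "C \<in> Mc \<Longrightarrow> Y \<in> ldag S \<Longrightarrow> \<xi> \<in> D \<Longrightarrow> C (Y (E \<xi>)) \<in> range Z"
  using RZ_CE[of C "Y (E \<xi>)"] YS_E[of Y \<xi>] by simp

lemma K2:
  assumes Y: "Y \<in> B" and r: "valid r" and s: "valid s"
  shows "cinner (val Y r) (zeta s) = cinner (zeta r) (val (adj S Y) s)"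
proof -
  let ?Yd = "adj S Y"
  have YL: "Y \<in> ldag S" by (rule B_ldag[OF Y])
  have YdL: "?Yd \<in> ldag S" by (rule adj_ldag(1)[OF sepr_S S_sub YL])
  define f where "f k = rC r k (E (rx r k))" for k
  define h where "h j = rC s j (?Yd (E (rx s j)))" for j
  have hRZ: "h j \<in> range Z" if "j < rn s" for j
    unfolding h_def by (rule CY_RZ[OF valid_C[OF s that] YdL valid_x[OF s that]])
  have "cinner (val Y r) (zeta s) =
      (\<Sum>j<rn s. cinner (val Y r) (rC s j (E (rx s j)))) + cinner (val Y r) (re s - Z (re s))"
    by (simp add: zeta_def cinner_add_right cinner_sum_right)
  also have "cinner (val Y r) (re s - Z (re s)) = 0" by (rule orthZ'[OF val_RZ[OF r YL]])
  also have "(\<Sum>j<rn s. cinner (val Y r) (rC s j (E (rx s j)))) = (\<Sum>j<rn s. \<Sum>k<rn r. cinner (f k) (h j))"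
  proof (rule sum.cong[OF refl])
    fix j assume "j \<in> {..<rn s}"
    then have j: "j < rn s" by simp
    have "cinner (val Y r) (rC s j (E (rx s j))) = (\<Sum>k<rn r. cinner (rC r k (Y (E (rx r k)))) (rC s j (E (rx s j))))"
      by (simp add: val_def cinner_sum_left)
    also have "\<dots> = (\<Sum>k<rn r. cinner (f k) (h j))"
    proof (rule sum.cong[OF refl])
      fix k assume "k \<in> {..<rn r}"
      then have k: "k < rn r" by simp
      show "cinner (rC r k (Y (E (rx r k)))) (rC s j (E (rx s j))) = cinner (f k) (h j)"
        unfolding f_def h_def
        by (rule L0[OF Y valid_C[OF r k] valid_C[OF s j] ES[OF valid_x[OF r k]] ES[OF valid_x[OF s j]]])
    qed
    finally show "cinner (val Y r) (rC s j (E (rx s j))) = (\<Sum>k<rn r. cinner (f k) (h j))" .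
  qed
  also have "(\<Sum>j<rn s. \<Sum>k<rn r. cinner (f k) (h j)) = cinner (zeta r) (val ?Yd s)"
  proof -
    have "cinner (zeta r) (val ?Yd s) = (\<Sum>j<rn s. cinner (zeta r) (h j))"
      by (simp add: val_def h_def cinner_sum_right)
    also have "\<dots> = (\<Sum>j<rn s. \<Sum>k<rn r. cinner (f k) (h j))"
    proof (rule sum.cong[OF refl])
      fix j assume "j \<in> {..<rn s}"
      then have j: "j < rn s" by simp
      have "cinner (zeta r) (h j) = (\<Sum>k<rn r. cinner (f k) (h j)) + cinner (re r - Z (re r)) (h j)"
        by (simp add: zeta_def f_def cinner_add_left cinner_sum_left)
      also have "cinner (re r - Z (re r)) (h j) = 0" by (rule orthZ[OF hRZ[OF j]])
      finally show "cinner (zeta r) (h j) = (\<Sum>k<rn r. cinner (f k) (h j))" by simp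
    qed
    finally show ?thesis by simp
  qed
  finally show ?thesis by simp
qed

definition shift :: "('h \<Rightarrow> 'h) \<Rightarrow> 'h rep \<Rightarrow> 'h rep" where
  "shift Y s = s\<lparr>rx := (\<lambda>k. Y (E (rx s k))), re := 0\<rparr>"

lemma shift_valid: assumes s: "valid s" and Y: "Y \<in> ldag S" shows "valid (shift Y s)"
  unfolding valid_def shift_def
  using s ldag_mem[OF Y ES] S_D D0 by (simp add: valid_def)

lemma shift_zeta: assumes s: "valid s" and Y: "Y \<in> ldag S" shows "zeta (shift Y s) = val Y s"
proof -
  have "zeta (shift Y s) = (\<Sum>k<rn s. rC s k (E (Y (E (rx s k)))))"
    by (simp add: zeta_def shift_def bops_zero[OF Z_bops])
  also have "\<dots> = (\<Sum>k<rn s. rC s k (Y (E (rx s k))))"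
    by (rule sum.cong[OF refl]) (simp add: YS_E[OF Y valid_x[OF s]])
  finally show ?thesis by (simp add: val_def)
qed

lemma shift_val: assumes s: "valid s" and Y: "Y \<in> ldag S"
  shows "val Y' (shift Y s) = val (Y' \<circ> Y) s"
proof -
  have "val Y' (shift Y s) = (\<Sum>k<rn s. rC s k (Y' (E (Y (E (rx s k))))))"
    by (simp add: val_def shift_def)
  also have "\<dots> = (\<Sum>k<rn s. rC s k (Y' (Y (E (rx s k)))))"
    by (rule sum.cong[OF refl]) (simp add: YS_E[OF Y valid_x[OF s]])
  finally show ?thesis by (simp add: val_def)
qed

lemma K2':
  assumes Y: "Y \<in> B" and r: "valid r" and s: "valid s"
  shows "cinner (val Y r) (val Y s) = cinner (zeta r) (val (adj S Y \<circ> Y) s)"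
proof -
  have YL: "Y \<in> ldag S" by (rule B_ldag[OF Y])
  have "cinner (val Y r) (val Y s) = cinner (val Y r) (zeta (shift Y s))" by (simp add: shift_zeta[OF s YL])
  also have "\<dots> = cinner (zeta r) (val (adj S Y) (shift Y s))" by (rule K2[OF Y r shift_valid[OF s YL]])
  also have "\<dots> = cinner (zeta r) (val (adj S Y \<circ> Y) s)" by (simp add: shift_val[OF s YL])
  finally show ?thesis .
qed

lemma val_add: assumes r: "valid r" shows "val (\<lambda>x. Y1 x + Y2 x) r = val Y1 r + val Y2 r"
proof -
  have "val (\<lambda>x. Y1 x + Y2 x) r = (\<Sum>k<rn r. rC r k (Y1 (E (rx r k))) + rC r k (Y2 (E (rx r k))))"
    unfolding val_def by (rule sum.cong[OF refl]) (simp add: bops_add[OF Mc_bops[OF valid_C[OF r]]])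
  then show ?thesis by (simp add: val_def sum.distrib)
qed

lemma K3:
  assumes Y: "Y \<in> B" and C: "C \<in> Mc" and r: "valid r" and s: "valid s"
  shows "cinner (C (val Y r)) (zeta s) = cinner (C (zeta r)) (val (adj S Y) s)"
proof -
  have CB: "C \<in> bops UNIV" by (rule Mc_bops[OF C])
  have YL: "Y \<in> ldag S" by (rule B_ldag[OF Y])
  have YdL: "adj S Y \<in> ldag S" by (rule adj_ldag(1)[OF sepr_S S_sub YL])
  define r' where "r' = r\<lparr>rC := (\<lambda>k. C \<circ> rC r k)\<rparr>"
  have r': "valid r'" using r by (simp add: r'_def valid_def Mc_comp[OF C])
  have v: "val Y r' = C (val Y r)" by (simp add: r'_def val_def bops_sum[OF CB])
  define P where "P = (\<Sum>k<rn r. C (rC r k (E (rx r k))))"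
  define w where "w = re r - Z (re r)"
  have z1: "zeta r' = P + w" by (simp add: r'_def zeta_def P_def w_def)
  have z2: "C (zeta r) = P + C w" by (simp add: zeta_def P_def w_def bops_add[OF CB] bops_sum[OF CB])
  let ?vs = "val (adj S Y) s"
  have o1: "cinner w ?vs = 0" unfolding w_def by (rule orthZ[OF val_RZ[OF s YdL]])
  have o2: "cinner (C w) ?vs = 0"
    using cadj[OF CB, of w ?vs] orthZ[OF cadj_val_RZ[OF C s YdL], of "re r"] by (simp add: w_def)
  have "cinner (C (val Y r)) (zeta s) = cinner (zeta r') ?vs" using K2[OF Y r' s] v by simp
  also have "\<dots> = cinner P ?vs" using o1 by (simp add: z1 cinner_add_left)
  also have "\<dots> = cinner (C (zeta r)) ?vs" using o2 by (simp add: z2 cinner_add_left)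
  finally show ?thesis .
qed

definition sing :: "('h \<Rightarrow> 'h) \<Rightarrow> 'h \<Rightarrow> 'h rep" where
  "sing C u = \<lparr>rn = 1, rC = (\<lambda>_. C), rx = (\<lambda>_. u), re = 0\<rparr>"

lemma sing_valid: "C \<in> Mc \<Longrightarrow> u \<in> D \<Longrightarrow> valid (sing C u)"
  by (simp add: sing_def valid_def D0)

lemma sing_zeta: "zeta (sing C u) = C (E u)"
  by (simp add: sing_def zeta_def bops_zero[OF Z_bops])

lemma sing_val: "val Y (sing C u) = C (Y (E u))"
  by (simp add: sing_def val_def)

end


lemma limit_zero:
  assumes h: "\<And>n. cinner d (f n) = 0" and f: "f \<longlonglongrightarrow> y"
  shows "cinner d y = (0::complex)"
proof -
  have "(\<lambda>n. cinner d (f n)) \<longlonglongrightarrow> cinner d y" by (intro tendsto_cinner tendsto_const f)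
  moreover have "(\<lambda>n. cinner d (f n)) \<longlonglongrightarrow> 0" using h by simp
  ultimately show ?thesis by (rule LIMSEQ_unique)
qed

lemma cauchy_from_bound:
  fixes u z v :: "nat \<Rightarrow> 'a::real_normed_vector"
  assumes z: "Cauchy z" and v: "Bseq v"
    and bd: "\<And>n m. (norm (u n - u m))\<^sup>2 \<le> norm (z n - z m) * norm (v n - v m)"
  shows "Cauchy u"
proof (rule CauchyI)
  fix \<epsilon> :: real assume \<epsilon>: "0 < \<epsilon>"
  obtain K where K: "K > 0" "\<forall>n. norm (v n) \<le> K" using v by (auto elim: BseqE)
  define \<delta> where "\<delta> = \<epsilon>\<^sup>2 / (2 * K + 1)"
  have \<delta>: "\<delta> > 0" using \<epsilon> K by (simp add: \<delta>_def)
  obtain M where M: "\<forall>m\<ge>M. \<forall>n\<ge>M. norm (z m - z n) < \<delta>" using z \<delta> by (auto simp: Cauchy_iff)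
  show "\<exists>M. \<forall>m\<ge>M. \<forall>n\<ge>M. norm (u m - u n) < \<epsilon>"
  proof (intro exI allI impI)
    fix m n assume m: "m \<ge> M" and n: "n \<ge> M"
    have dv: "norm (v m - v n) \<le> 2 * K"
      using norm_triangle_ineq4[of "v m" "v n"] K(2)[rule_format, of m] K(2)[rule_format, of n] by linarith
    have dz: "norm (z m - z n) \<le> \<delta>" using M m n by (simp add: less_imp_le)
    have "(norm (u m - u n))\<^sup>2 \<le> norm (z m - z n) * norm (v m - v n)" by (rule bd)
    also have "\<dots> \<le> \<delta> * (2 * K)" using dz dv \<delta> by (intro mult_mono) auto
    also have "\<dots> < \<epsilon>\<^sup>2"
    proof -
      have "\<delta> * (2 * K) < \<delta> * (2 * K + 1)" using \<delta> by simp
      also have "\<delta> * (2 * K + 1) = \<epsilon>\<^sup>2" using K by (simp add: \<delta>_def)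
      finally show ?thesis .
    qed
    finally show "norm (u m - u n) < \<epsilon>" using \<epsilon> by (simp add: power_less_imp_less_base)
  qed
qed

context setting
begin

definition Pc :: "('h \<Rightarrow> 'h) \<Rightarrow> 'h \<Rightarrow> 'h \<Rightarrow> bool" where
  "Pc Y \<xi> w \<longleftrightarrow> w \<in> range Z \<and> (\<forall>C\<in>Mc. \<forall>u\<in>D. cinner w (C (E u)) = cinner \<xi> (C (adj S Y (E u))))"

lemma LL:
  assumes Y: "Y \<in> B" and r: "\<And>n. valid (r n)" and z: "(\<lambda>n. zeta (r n)) \<longlonglongrightarrow> \<xi>"
    and v: "(\<lambda>n. val Y (r n)) \<longlonglongrightarrow> w"
  shows "Pc Y \<xi> w"
proof -
  have YL: "Y \<in> ldag S" by (rule B_ldag[OF Y])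
  have "w \<in> range Z" by (rule closed_sequentially[OF RZ_closed val_RZ[OF r YL] v])
  moreover have "cinner w (C (E u)) = cinner \<xi> (C (adj S Y (E u)))" if C: "C \<in> Mc" and u: "u \<in> D" for C u
  proof -
    have eq: "cinner (val Y (r n)) (C (E u)) = cinner (zeta (r n)) (C (adj S Y (E u)))" for n
      using K2[OF Y r sing_valid[OF C u]] by (simp add: sing_zeta sing_val)
    have "(\<lambda>n. cinner (val Y (r n)) (C (E u))) \<longlonglongrightarrow> cinner w (C (E u))"
      by (intro tendsto_cinner v tendsto_const)
    moreover have "(\<lambda>n. cinner (val Y (r n)) (C (E u))) \<longlonglongrightarrow> cinner \<xi> (C (adj S Y (E u)))"
      unfolding eq by (intro tendsto_cinner z tendsto_const)
    ultimately show ?thesis by (rule LIMSEQ_unique)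
  qed
  ultimately show ?thesis by (simp add: Pc_def)
qed

lemma U:
  assumes P1: "Pc Y \<xi> w1" and P2: "Pc Y \<xi> w2"
  shows "w1 = w2"
proof -
  define d where "d = w1 - w2"
  have dZ: "d \<in> range Z" using P1 P2 by (simp add: Pc_def d_def RZ_diff)
  have h1: "cinner d (C (E u)) = 0" if C: "C \<in> Mc" and u: "u \<in> D" for C u
    using P1 P2 C u by (simp add: Pc_def d_def cinner_diff_left)
  have h2: "cinner d (C (E x)) = 0" if C: "C \<in> Mc" for C x
  proof -
    have "x \<in> closure D" using D_dense by simp
    then obtain u where u: "\<And>n. u n \<in> D" "u \<longlonglongrightarrow> x" using closure_sequential by blast
    have "(\<lambda>n. C (E (u n))) \<longlonglongrightarrow> C (E x)" by (intro bops_tendsto[OF Mc_bops[OF C]] bops_tendsto[OF E_bops] u)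
    then show ?thesis by (rule limit_zero[rotated]) (rule h1[OF C u(1)])
  qed
  have h3: "cinner d y = 0" if y: "y \<in> cspan (\<Union>C\<in>Mc. range (C \<circ> E))" for y
  proof -
    obtain n a v where v: "\<forall>k<(n::nat). v k \<in> (\<Union>C\<in>Mc. range (C \<circ> E))" and yv: "y = (\<Sum>k<n. a k *\<^sub>C v k)"
      using y unfolding cspan_def by blast
    have "cinner d y = (\<Sum>k<n. cnj (a k) * cinner d (v k))" by (simp add: yv cinner_sum_right cinner_scaleC_right)
    also have "\<dots> = 0"
    proof (rule sum.neutral, rule ballI)
      fix k assume "k \<in> {..<n}"
      then obtain C x where "C \<in> Mc" "v k = C (E x)" using v by auto
      then show "cnj (a k) * cinner d (v k) = 0" using h2 by simp
    qed
    finally show ?thesis .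
  qed
  have h4: "cinner d y = 0" if y: "y \<in> closure (cspan (\<Union>C\<in>Mc. range (C \<circ> E)))" for y
  proof -
    obtain f where f: "\<And>n. f n \<in> cspan (\<Union>C\<in>Mc. range (C \<circ> E))" "f \<longlonglongrightarrow> y"
      using y closure_sequential by blast
    show ?thesis by (rule limit_zero[OF h3[OF f(1)] f(2)])
  qed
  have "cinner d d = 0" using h4 dZ Z_range by simp
  then have "d = 0" using cinner_self_eq_zero by blast
  then show ?thesis by (simp add: d_def)
qed

end

locale setting2 = setting +
  assumes dom_hyp: "(\<Inter>X\<in>wbicomm (range E) (E ` D) (reduced_alg D E M).
                     closure_dom (ext_graph D (wcomm UNIV D M) E Z X)) = D"
begin

lemma dom: "\<xi> \<in> D \<Longrightarrow> X \<in> B \<Longrightarrow> \<xi> \<in> closure_dom (ext_graph D Mc E Z X)"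
  using dom_hyp by blast

lemma domI: "(\<And>X. X \<in> B \<Longrightarrow> \<xi> \<in> closure_dom (ext_graph D Mc E Z X)) \<Longrightarrow> \<xi> \<in> D"
  using dom_hyp by blast

lemma CL:
  assumes Y1: "Y1 \<in> B" and Y2: "Y2 \<in> B" and xi: "\<xi> \<in> D"
  shows "\<exists>r. (\<forall>n. valid (r n)) \<and> (\<lambda>n. zeta (r n)) \<longlonglongrightarrow> \<xi> \<and>
             convergent (\<lambda>n. val Y1 (r n)) \<and> convergent (\<lambda>n. val Y2 (r n))"
proof -
  let ?A1 = "adj S Y1 \<circ> Y1" and ?A2 = "adj S Y2 \<circ> Y2"
  let ?A = "\<lambda>x. ?A1 x + ?A2 x"
  have A: "?A \<in> B" by (intro B_add B_comp B_adj Y1 Y2)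
  have "\<xi> \<in> closure_dom (ext_graph D Mc E Z ?A)" by (rule dom[OF xi A])
  then obtain f g where fg: "\<And>n. (f n, g n) \<in> ext_graph D Mc E Z ?A" "f \<longlonglongrightarrow> \<xi>" "convergent g"
    unfolding closure_dom_def by blast
  have "\<forall>n. \<exists>r. valid r \<and> f n = zeta r \<and> g n = val ?A r" using fg(1) ext_graph_iff by blast
  then have "\<exists>r. \<forall>n. valid (r n) \<and> f n = zeta (r n) \<and> g n = val ?A (r n)" by (rule choice)
  then obtain r where r: "\<And>n. valid (r n)" "\<And>n. f n = zeta (r n)" "\<And>n. g n = val ?A (r n)" by blast
  define z where "z n = zeta (r n)" for n
  define v where "v n = val ?A (r n)" for n
  have "f = z" by (rule ext) (simp add: z_def r(2))
  then have zc: "z \<longlonglongrightarrow> \<xi>" using fg(2) by simp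
  have "g = v" by (rule ext) (simp add: v_def r(3))
  then have vc: "convergent v" using fg(3) by simp
  define u1 where "u1 n = val Y1 (r n)" for n
  define u2 where "u2 n = val Y2 (r n)" for n
  have G: "cinner (z p) (v q) = cinner (u1 p) (u1 q) + cinner (u2 p) (u2 q)" for p q
    using K2'[OF Y1 r(1) r(1), of p q] K2'[OF Y2 r(1) r(1), of p q]
    by (simp add: z_def v_def u1_def u2_def val_add[OF r(1)] cinner_add_right comp_def)
  have key: "(norm (u1 n - u1 m))\<^sup>2 + (norm (u2 n - u2 m))\<^sup>2 \<le> norm (z n - z m) * norm (v n - v m)" for n m
  proof -
    have "cinner (z n - z m) (v n - v m) = cinner (u1 n - u1 m) (u1 n - u1 m) + cinner (u2 n - u2 m) (u2 n - u2 m)"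
      by (simp add: cinner_diff_left cinner_diff_right G algebra_simps)
    then have "Re (cinner (z n - z m) (v n - v m)) = (norm (u1 n - u1 m))\<^sup>2 + (norm (u2 n - u2 m))\<^sup>2"
      by (simp add: Re_cinner_self)
    moreover have "Re (cinner (z n - z m) (v n - v m)) \<le> norm (z n - z m) * norm (v n - v m)"
      using complex_Re_le_cmod cauchy_schwarz order_trans by blast
    ultimately show ?thesis by simp
  qed
  have zC: "Cauchy z" using zc by (rule LIMSEQ_imp_Cauchy)
  have vB: "Bseq v" using vc by (rule convergent_imp_Bseq)
  have b1: "(norm (u1 n - u1 m))\<^sup>2 \<le> norm (z n - z m) * norm (v n - v m)" for n m
    using key[of n m] zero_le_power2[of "norm (u2 n - u2 m)"] by linarith
  have b2: "(norm (u2 n - u2 m))\<^sup>2 \<le> norm (z n - z m) * norm (v n - v m)" for n m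
    using key[of n m] zero_le_power2[of "norm (u1 n - u1 m)"] by linarith
  have "Cauchy u1" by (rule cauchy_from_bound[OF zC vB b1])
  moreover have "Cauchy u2" by (rule cauchy_from_bound[OF zC vB b2])
  ultimately have "convergent u1" "convergent u2" by (simp_all add: Cauchy_convergent_iff)
  then show ?thesis using r(1) zc unfolding z_def[abs_def] u1_def[abs_def] u2_def[abs_def] by blast
qed

end


context setting2
begin

lemma Ex: assumes Y: "Y \<in> B" and xi: "\<xi> \<in> D" shows "\<exists>w. Pc Y \<xi> w"
proof -
  obtain r where r: "\<And>n. valid (r n)" "(\<lambda>n. zeta (r n)) \<longlonglongrightarrow> \<xi>" "convergent (\<lambda>n. val Y (r n))"
    using CL[OF Y Y xi] by blast
  then obtain w where "(\<lambda>n. val Y (r n)) \<longlonglongrightarrow> w" by (auto simp: convergent_def)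
  then show ?thesis using LL[OF Y r(1) r(2)] by blast
qed

definition Xe where
  "Xe Y = (\<lambda>x. if x \<in> D then (THE w. Pc Y x w) else 0)"

lemma Xe_P: assumes Y: "Y \<in> B" and xi: "\<xi> \<in> D" shows "Pc Y \<xi> (Xe Y \<xi>)"
proof -
  obtain w where w: "Pc Y \<xi> w" using Ex[OF Y xi] by blast
  have "(THE w. Pc Y \<xi> w) = w"
  proof (rule the_equality[of "Pc Y \<xi>" w])
    show "Pc Y \<xi> w" by (rule w)
    show "\<And>x. Pc Y \<xi> x \<Longrightarrow> x = w" using U w by blast
  qed
  then show ?thesis using w xi by (simp add: Xe_def)
qed

lemma Xe_eq: "Y \<in> B \<Longrightarrow> \<xi> \<in> D \<Longrightarrow> Pc Y \<xi> w \<Longrightarrow> Xe Y \<xi> = w"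
  using Xe_P U by blast

lemma Xe_lim:
  assumes Y: "Y \<in> B" and r: "\<And>n. valid (r n)" and z: "(\<lambda>n. zeta (r n)) \<longlonglongrightarrow> \<xi>" and xi: "\<xi> \<in> D"
    and v: "(\<lambda>n. val Y (r n)) \<longlonglongrightarrow> w"
  shows "Xe Y \<xi> = w"
  by (rule Xe_eq[OF Y xi LL[OF Y r z v]])

lemma CL1:
  assumes Y1: "Y1 \<in> B" and Y2: "Y2 \<in> B" and xi: "\<xi> \<in> D"
  obtains r where "\<And>n. valid (r n)" "(\<lambda>n. zeta (r n)) \<longlonglongrightarrow> \<xi>"
    "(\<lambda>n. val Y1 (r n)) \<longlonglongrightarrow> Xe Y1 \<xi>" "convergent (\<lambda>n. val Y2 (r n))"
proof -
  obtain r where r: "\<And>n. valid (r n)" "(\<lambda>n. zeta (r n)) \<longlonglongrightarrow> \<xi>"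
      "convergent (\<lambda>n. val Y1 (r n))" "convergent (\<lambda>n. val Y2 (r n))"
    using CL[OF Y1 Y2 xi] by blast
  obtain w where w: "(\<lambda>n. val Y1 (r n)) \<longlonglongrightarrow> w" using r(3) by (auto simp: convergent_def)
  have "Xe Y1 \<xi> = w" by (rule Xe_lim[OF Y1 r(1) r(2) xi w])
  then show ?thesis using that r w by blast
qed

lemma Xe_D: assumes Y: "Y \<in> B" and xi: "\<xi> \<in> D" shows "Xe Y \<xi> \<in> D"
proof (rule domI)
  fix Y' assume Y': "Y' \<in> B"
  have YL: "Y \<in> ldag S" by (rule B_ldag[OF Y])
  obtain r where r: "\<And>n. valid (r n)" "(\<lambda>n. zeta (r n)) \<longlonglongrightarrow> \<xi>"
      "(\<lambda>n. val Y (r n)) \<longlonglongrightarrow> Xe Y \<xi>" "convergent (\<lambda>n. val (Y' \<circ> Y) (r n))"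
    using CL1[OF Y B_comp[OF Y' Y] xi] by blast
  define s where "s n = shift Y (r n)" for n
  have s: "valid (s n)" for n unfolding s_def by (rule shift_valid[OF r(1) YL])
  have zs: "zeta (s n) = val Y (r n)" for n unfolding s_def by (rule shift_zeta[OF r(1) YL])
  have vs: "val Y' (s n) = val (Y' \<circ> Y) (r n)" for n unfolding s_def by (rule shift_val[OF r(1) YL])
  have g: "\<forall>n. (zeta (s n), val Y' (s n)) \<in> ext_graph D Mc E Z Y'"
    using s ext_graph_iff by blast
  have l: "(\<lambda>n. zeta (s n)) \<longlonglongrightarrow> Xe Y \<xi>" using r(3) by (simp add: zs)
  have c: "convergent (\<lambda>n. val Y' (s n))" using r(4) by (simp add: vs)
  show "Xe Y \<xi> \<in> closure_dom (ext_graph D Mc E Z Y')"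
    unfolding closure_dom_def
    by (intro CollectI exI[of _ "\<lambda>n. zeta (s n)"] exI[of _ "\<lambda>n. val Y' (s n)"] conjI g l c)
qed

lemma Xe_add: assumes Y: "Y \<in> B" and a: "a \<in> D" and b: "b \<in> D"
  shows "Xe Y (a + b) = Xe Y a + Xe Y b"
proof (rule Xe_eq[OF Y Dadd[OF a b]])
  have Pa: "Pc Y a (Xe Y a)" and Pb: "Pc Y b (Xe Y b)" using Xe_P[OF Y] a b by blast+
  then show "Pc Y (a + b) (Xe Y a + Xe Y b)"
    by (simp add: Pc_def RZ_add cinner_add_left)
qed

lemma Xe_scaleC: assumes Y: "Y \<in> B" and a: "a \<in> D"
  shows "Xe Y (c *\<^sub>C a) = c *\<^sub>C Xe Y a"
proof (rule Xe_eq[OF Y DC[OF a]])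
  have Pa: "Pc Y a (Xe Y a)" using Xe_P[OF Y] a by blast
  then show "Pc Y (c *\<^sub>C a) (c *\<^sub>C Xe Y a)"
    by (simp add: Pc_def RZ_scaleC cinner_scaleC_left)
qed

lemma Xe_adj: assumes Y: "Y \<in> B" and xi: "\<xi> \<in> D" and eta: "\<eta> \<in> D"
  shows "cinner (Xe Y \<xi>) \<eta> = cinner \<xi> (Xe (adj S Y) \<eta>)"
proof -
  have Yd: "adj S Y \<in> B" by (rule B_adj[OF Y])
  obtain r where r: "\<And>n. valid (r n)" "(\<lambda>n. zeta (r n)) \<longlonglongrightarrow> \<xi>"
      "(\<lambda>n. val Y (r n)) \<longlonglongrightarrow> Xe Y \<xi>"
    using CL1[OF Y Y xi] by blast
  obtain s where s: "\<And>n. valid (s n)" "(\<lambda>n. zeta (s n)) \<longlonglongrightarrow> \<eta>"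
      "(\<lambda>n. val (adj S Y) (s n)) \<longlonglongrightarrow> Xe (adj S Y) \<eta>"
    using CL1[OF Yd Yd eta] by blast
  have step: "cinner (Xe Y \<xi>) (zeta (s m)) = cinner \<xi> (val (adj S Y) (s m))" for m
  proof -
    have "(\<lambda>n. cinner (val Y (r n)) (zeta (s m))) \<longlonglongrightarrow> cinner (Xe Y \<xi>) (zeta (s m))"
      by (intro tendsto_cinner r(3) tendsto_const)
    moreover have "(\<lambda>n. cinner (val Y (r n)) (zeta (s m))) \<longlonglongrightarrow> cinner \<xi> (val (adj S Y) (s m))"
      unfolding K2[OF Y r(1) s(1)] by (intro tendsto_cinner r(2) tendsto_const)
    ultimately show ?thesis by (rule LIMSEQ_unique)
  qed
  have "(\<lambda>m. cinner (Xe Y \<xi>) (zeta (s m))) \<longlonglongrightarrow> cinner (Xe Y \<xi>) \<eta>"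
    by (intro tendsto_cinner s(2) tendsto_const)
  moreover have "(\<lambda>m. cinner (Xe Y \<xi>) (zeta (s m))) \<longlonglongrightarrow> cinner \<xi> (Xe (adj S Y) \<eta>)"
    unfolding step by (intro tendsto_cinner s(3) tendsto_const)
  ultimately show ?thesis by (rule LIMSEQ_unique)
qed

lemma Xe_comm: assumes Y: "Y \<in> B" and C: "C \<in> Mc" and xi: "\<xi> \<in> D" and eta: "\<eta> \<in> D"
  shows "cinner (C (Xe Y \<xi>)) \<eta> = cinner (C \<xi>) (Xe (adj S Y) \<eta>)"
proof -
  have CB: "C \<in> bops UNIV" by (rule Mc_bops[OF C])
  have Yd: "adj S Y \<in> B" by (rule B_adj[OF Y])
  obtain r where r: "\<And>n. valid (r n)" "(\<lambda>n. zeta (r n)) \<longlonglongrightarrow> \<xi>"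
      "(\<lambda>n. val Y (r n)) \<longlonglongrightarrow> Xe Y \<xi>"
    using CL1[OF Y Y xi] by blast
  obtain s where s: "\<And>n. valid (s n)" "(\<lambda>n. zeta (s n)) \<longlonglongrightarrow> \<eta>"
      "(\<lambda>n. val (adj S Y) (s n)) \<longlonglongrightarrow> Xe (adj S Y) \<eta>"
    using CL1[OF Yd Yd eta] by blast
  have step: "cinner (C (Xe Y \<xi>)) (zeta (s m)) = cinner (C \<xi>) (val (adj S Y) (s m))" for m
  proof -
    have "(\<lambda>n. cinner (C (val Y (r n))) (zeta (s m))) \<longlonglongrightarrow> cinner (C (Xe Y \<xi>)) (zeta (s m))"
      by (intro tendsto_cinner bops_tendsto[OF CB] r(3) tendsto_const)
    moreover have "(\<lambda>n. cinner (C (val Y (r n))) (zeta (s m))) \<longlonglongrightarrow> cinner (C \<xi>) (val (adj S Y) (s m))"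
      unfolding K3[OF Y C r(1) s(1)] by (intro tendsto_cinner bops_tendsto[OF CB] r(2) tendsto_const)
    ultimately show ?thesis by (rule LIMSEQ_unique)
  qed
  have "(\<lambda>m. cinner (C (Xe Y \<xi>)) (zeta (s m))) \<longlonglongrightarrow> cinner (C (Xe Y \<xi>)) \<eta>"
    by (intro tendsto_cinner s(2) tendsto_const)
  moreover have "(\<lambda>m. cinner (C (Xe Y \<xi>)) (zeta (s m))) \<longlonglongrightarrow> cinner (C \<xi>) (Xe (adj S Y) \<eta>)"
    unfolding step by (intro tendsto_cinner s(3) tendsto_const)
  ultimately show ?thesis by (rule LIMSEQ_unique)
qed

lemma Xe_ldag: assumes Y: "Y \<in> B" shows "Xe Y \<in> ldag D"
proof -
  have Yd: "adj S Y \<in> B" by (rule B_adj[OF Y])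
  have c1: "clinear_on D (Xe Y)" unfolding clinear_on_def
    using Xe_add[OF Y] Xe_scaleC[OF Y] by blast
  have c2: "Xe Y ` D \<subseteq> D" using Xe_D[OF Y] by blast
  have c3: "\<forall>\<eta>\<in>D. \<exists>\<zeta>\<in>D. \<forall>\<xi>\<in>D. cinner (Xe Y \<xi>) \<eta> = cinner \<xi> \<zeta>"
  proof (intro ballI)
    fix \<eta> assume eta: "\<eta> \<in> D"
    show "\<exists>\<zeta>\<in>D. \<forall>\<xi>\<in>D. cinner (Xe Y \<xi>) \<eta> = cinner \<xi> \<zeta>"
      by (rule bexI[of _ "Xe (adj S Y) \<eta>"]) (use Xe_adj[OF Y _ eta] Xe_D[OF Yd eta] in blast)+
  qed
  have c4: "\<forall>x. x \<notin> D \<longrightarrow> Xe Y x = 0" by (simp add: Xe_def)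
  show ?thesis unfolding ldag_def by (intro CollectI conjI c1 c2 c3 c4)
qed

lemma Xe_adjD: assumes Y: "Y \<in> B" and eta: "\<eta> \<in> D" shows "adj D (Xe Y) \<eta> = Xe (adj S Y) \<eta>"
proof (rule adj_unique[OF sepr_D Xe_ldag[OF Y] eta Xe_D[OF B_adj[OF Y] eta]])
  show "\<forall>\<xi>\<in>D. cinner (Xe Y \<xi>) \<eta> = cinner \<xi> (Xe (adj S Y) \<eta>)" using Xe_adj[OF Y _ eta] by blast
qed

lemma Xe_wbicomm: assumes Y: "Y \<in> B" shows "Xe Y \<in> wbicomm UNIV D M"
proof -
  have "cinner (C (Xe Y \<xi>)) \<eta> = cinner (C \<xi>) (adj D (Xe Y) \<eta>)"
    if C: "C \<in> Mc" and xi: "\<xi> \<in> D" and eta: "\<eta> \<in> D" for C \<xi> \<eta>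
    using Xe_comm[OF Y C xi eta] Xe_adjD[OF Y eta] by simp
  then show ?thesis using Xe_ldag[OF Y] unfolding wbicomm_def by blast
qed

lemma rd_Xe: assumes Y: "Y \<in> B" shows "rd D E (Xe Y) = Y"
proof
  fix x
  have YL: "Y \<in> ldag S" by (rule B_ldag[OF Y])
  show "rd D E (Xe Y) x = Y x"
  proof (cases "x \<in> S")
    case True
    have xD: "x \<in> D" by (rule S_D[OF True])
    have Ex: "E x = x" by (rule S_E[OF True])
    define r where "r = (\<lambda>n::nat. sing (\<lambda>y. y) x)"
    have r: "valid (r n)" for n unfolding r_def by (rule sing_valid[OF Mc_id xD])
    have z: "(\<lambda>n. zeta (r n)) \<longlonglongrightarrow> x" by (simp add: r_def sing_zeta Ex)
    have v: "(\<lambda>n. val Y (r n)) \<longlonglongrightarrow> Y x" by (simp add: r_def sing_val Ex)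
    have "Xe Y x = Y x" by (rule Xe_lim[OF Y r z xD v])
    then show ?thesis using rd_on_S[OF True] by simp
  next
    case False
    then show ?thesis by (simp add: rd_def ldag_out[OF YL])
  qed
qed

theorem main: "reduced_alg D E (wbicomm UNIV D M) = B"
proof
  have "reduced_alg D E (wbicomm UNIV D M) = rd D E ` wbicomm UNIV D M" by (rule reduced_alg_rd)
  then show "reduced_alg D E (wbicomm UNIV D M) \<subseteq> B" using incl1 by auto
next
  show "B \<subseteq> reduced_alg D E (wbicomm UNIV D M)"
  proof
    fix Y assume Y: "Y \<in> B"
    have "Y = rd D E (Xe Y)" by (rule rd_Xe[OF Y, symmetric])
    moreover have "reduced_alg D E (wbicomm UNIV D M) = rd D E ` wbicomm UNIV D M" by (rule reduced_alg_rd)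
    ultimately show "Y \<in> reduced_alg D E (wbicomm UNIV D M)" using Xe_wbicomm[OF Y] by auto
  qed
qed

end


theorem theorem2p2:
  fixes D :: "'h::chilbert_space set"
    and M :: "('h \<Rightarrow> 'h) set"
    and E Z :: "'h \<Rightarrow> 'h"
  assumes D_sub: "csubspace D"
    and D_dense: "closure D = UNIV"
    and M_Ostar: "is_Ostar_algebra D M"
    and M_closed: "graph_closed D M"
    and Mc_inv: "\<forall>C\<in>wcomm UNIV D M. C ` D \<subseteq> D"
    and E_proj: "is_proj UNIV E"
    and E_comm: "E \<in> wcomm UNIV D M"
    and Z_proj: "is_proj UNIV Z"
    and Z_range: "range Z = closure (cspan (\<Union>C\<in>wcomm UNIV D M. range (C \<circ> E)))"
    and dom_hyp: "(\<Inter>X\<in>wbicomm (range E) (E ` D) (reduced_alg D E M).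
                     closure_dom (ext_graph D (wcomm UNIV D M) E Z X)) = D"
  shows "reduced_alg D E (wbicomm UNIV D M) = wbicomm (range E) (E ` D) (reduced_alg D E M)"
proof -
  interpret setting2 D M E Z
    by (intro setting2.intro setting.intro setting2_axioms.intro D_sub D_dense M_Ostar Mc_inv
        E_proj E_comm Z_proj Z_range dom_hyp)
  show ?thesis by (rule main)
qed

end
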